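(* Let $\kappa$ be a kernel on a type space $(\mathcal S,\mu)$. (i) If $\kappa$ is critical and $T_\kappa$ is a compact operator on $L^2(\mu)$, then $\chi(\kappa)=\infty$. In particular, this applies if $\int_{\mathcal S^2}\kappa(x,y)^2\,d\mu(x)\,d\mu(y)<\infty$. (ii) If $\kappa$ is supercritical, then $\chi(\kappa)=\infty$.
   Context: A type space is a measure space $(\mathcal S,\mu)$ with $0<\mu(\mathcal S)<\infty$; a kernel is a symmetric measurable $\kappa:\mathcal S^2\to[0,\infty)$ with $\int_{\mathcal S^2}\kappa<\infty$ and $\int\kappa(x,y)d\mu(y)<\infty$ for all $x$. $T_\kappa f(x)=\int\kappa(x,y)f(y)d\mu(y)$, $\|T_\kappa\|=\sup\{\|T_\kappa f\|_{L^2(\mu)}:f\ge0,\|f\|_{L^2(\mu)}\le1\}$; $\kappa$ is critical if $\|T_\kappa\|=1$ and supercritical if $\|T_\kappa\|>1$. The branching process $\mathfrak X_\kappa(x)$ starts with one particle of type $x$; each particle of type $y$ independently has children whose types form a Poisson process with intensity $\kappa(y,z)\,d\mu(z)$; $\chi(\kappa)=\mu(\mathcal S)^{-1}\int\mathbb E|\mathfrak X_\kappa(x)|\,d\mu(x)$. *)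

theory Defs
  imports "HOL-Analysis.Analysis"
begin

definition type_space :: "'a measure \<Rightarrow> bool" where
  "type_space M \<longleftrightarrow> 0 < emeasure M (space M) \<and> emeasure M (space M) < \<infinity>"

definition is_kernel :: "'a measure \<Rightarrow> ('a \<Rightarrow> 'a \<Rightarrow> real) \<Rightarrow> bool" where
  "is_kernel M \<kappa> \<longleftrightarrow>
     (\<lambda>z. \<kappa> (fst z) (snd z)) \<in> borel_measurable (M \<Otimes>\<^sub>M M) \<and>
     (\<forall>x\<in>space M. \<forall>y\<in>space M. 0 \<le> \<kappa> x y \<and> \<kappa> x y = \<kappa> y x) \<and>
     (\<integral>\<^sup>+ z. ennreal (\<kappa> (fst z) (snd z)) \<partial>(M \<Otimes>\<^sub>M M)) < \<infinity> \<and>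
     (\<forall>x\<in>space M. (\<integral>\<^sup>+ y. ennreal (\<kappa> x y) \<partial>M) < \<infinity>)"

definition enn_sqrt :: "ennreal \<Rightarrow> ennreal" where
  "enn_sqrt a = (if a = \<infinity> then \<infinity> else ennreal (sqrt (enn2real a)))"

definition L2norm_enn :: "'a measure \<Rightarrow> ('a \<Rightarrow> ennreal) \<Rightarrow> ennreal" where
  "L2norm_enn M g = enn_sqrt (\<integral>\<^sup>+ x. g x ^ 2 \<partial>M)"

definition T_nn :: "'a measure \<Rightarrow> ('a \<Rightarrow> 'a \<Rightarrow> real) \<Rightarrow> ('a \<Rightarrow> real) \<Rightarrow> 'a \<Rightarrow> ennreal" where
  "T_nn M \<kappa> f x = (\<integral>\<^sup>+ y. ennreal (\<kappa> x y) * ennreal (f y) \<partial>M)"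

definition T_norm :: "'a measure \<Rightarrow> ('a \<Rightarrow> 'a \<Rightarrow> real) \<Rightarrow> ennreal" where
  "T_norm M \<kappa> = (SUP f \<in> {f. f \<in> borel_measurable M \<and> (\<forall>x\<in>space M. 0 \<le> f x) \<and>
                           (\<integral>\<^sup>+ x. ennreal ((f x)\<^sup>2) \<partial>M) \<le> 1}.
                   L2norm_enn M (T_nn M \<kappa> f))"

definition critical :: "'a measure \<Rightarrow> ('a \<Rightarrow> 'a \<Rightarrow> real) \<Rightarrow> bool" where
  "critical M \<kappa> \<longleftrightarrow> T_norm M \<kappa> = 1"

definition supercritical :: "'a measure \<Rightarrow> ('a \<Rightarrow> 'a \<Rightarrow> real) \<Rightarrow> bool" where
  "supercritical M \<kappa> \<longleftrightarrow> T_norm M \<kappa> > 1"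

definition in_L2 :: "'a measure \<Rightarrow> ('a \<Rightarrow> real) \<Rightarrow> bool" where
  "in_L2 M f \<longleftrightarrow> f \<in> borel_measurable M \<and> (\<integral>\<^sup>+ x. ennreal ((f x)\<^sup>2) \<partial>M) < \<infinity>"

definition T_op :: "'a measure \<Rightarrow> ('a \<Rightarrow> 'a \<Rightarrow> real) \<Rightarrow> ('a \<Rightarrow> real) \<Rightarrow> 'a \<Rightarrow> real" where
  "T_op M \<kappa> f x = (\<integral> y. \<kappa> x y * f y \<partial>M)"

text \<open>T_kappa is a compact operator on L2(mu): it is well defined on L2 (the defining
  integral exists a.e. and the result lies in L2), and the image of the closed unit
  ball is relatively compact, i.e. every sequence in the unit ball has a subsequence
  whose images form a Cauchy sequence in L2 (L2 is complete).\<close>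
definition T_compact :: "'a measure \<Rightarrow> ('a \<Rightarrow> 'a \<Rightarrow> real) \<Rightarrow> bool" where
  "T_compact M \<kappa> \<longleftrightarrow>
     (\<forall>f. in_L2 M f \<longrightarrow>
        (AE x in M. integrable M (\<lambda>y. \<kappa> x y * f y)) \<and> in_L2 M (T_op M \<kappa> f)) \<and>
     (\<forall>F :: nat \<Rightarrow> 'a \<Rightarrow> real.
        (\<forall>n. in_L2 M (F n) \<and> (\<integral>\<^sup>+ x. ennreal ((F n x)\<^sup>2) \<partial>M) \<le> 1) \<longrightarrow>
        (\<exists>r :: nat \<Rightarrow> nat. strict_mono r \<and>
           (\<forall>e>0. \<exists>N::nat. \<forall>m\<ge>N. \<forall>n\<ge>N.
              (\<integral>\<^sup>+ x. ennreal ((T_op M \<kappa> (F (r m)) x - T_op M \<kappa> (F (r n)) x)\<^sup>2) \<partial>M)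
                < ennreal e)))"

text \<open>Expected number of particles in generation n of the branching process
  X_kappa(x): gen_mean 0 x = 1 and gen_mean (n+1) x = int kappa(x,y) gen_mean n y dmu(y)
  (each particle of type y has Poisson(kappa(y,z) dmu(z)) children).\<close>
fun gen_mean :: "'a measure \<Rightarrow> ('a \<Rightarrow> 'a \<Rightarrow> real) \<Rightarrow> nat \<Rightarrow> 'a \<Rightarrow> ennreal" where
  "gen_mean M \<kappa> 0 x = 1"
| "gen_mean M \<kappa> (Suc n) x = (\<integral>\<^sup>+ y. ennreal (\<kappa> x y) * gen_mean M \<kappa> n y \<partial>M)"

definition expected_size :: "'a measure \<Rightarrow> ('a \<Rightarrow> 'a \<Rightarrow> real) \<Rightarrow> 'a \<Rightarrow> ennreal" where
  "expected_size M \<kappa> x = (\<Sum>n. gen_mean M \<kappa> n x)"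

definition chi :: "'a measure \<Rightarrow> ('a \<Rightarrow> 'a \<Rightarrow> real) \<Rightarrow> ennreal" where
  "chi M \<kappa> = (\<integral>\<^sup>+ x. expected_size M \<kappa> x \<partial>M) / emeasure M (space M)"

end

theory Submission
  imports Defs "HOL-Library.Diagonal_Subsequence"
begin


lemma ennreal_unbounded:
  assumes h: "\<And>N::nat. of_nat N * c \<le> (X::ennreal)" and c: "c \<noteq> 0" shows "X = \<infinity>"
proof (rule ccontr)
  assume "X \<noteq> \<infinity>"
  then obtain r where r: "X = ennreal r" "0 \<le> r" by (cases X) auto
  have "c \<le> X" using h[of 1] by simp
  then obtain c' where c': "c = ennreal c'" "0 \<le> c'" using r by (cases c) (auto simp: top_unique)
  with c have cp: "c' > 0" by auto
  obtain N :: nat where N: "r / c' < N" using reals_Archimedean2 by blast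
  have "ennreal (N * c') \<le> ennreal r" using h[of N] r c' by (simp add: ennreal_mult ennreal_of_nat_eq_real_of_nat)
  then have "N * c' \<le> r" using r by (simp add: ennreal_le_iff)
  moreover have "r < N * c'" using N cp by (simp add: field_simps)
  ultimately show False by simp
qed

lemma logconv_real:
  fixes Q :: "nat \<Rightarrow> real"
  assumes nn: "\<And>n. 0 \<le> Q n" and cs: "\<And>n. (Q (Suc n))\<^sup>2 \<le> Q (Suc (Suc n)) * Q n"
    and q0: "0 < Q 0" and r: "0 < r" and q1: "r * Q 0 \<le> Q 1"
  shows "r ^ n * Q 0 \<le> Q n"
proof -
  have "r * Q n \<le> Q (Suc n) \<and> 0 < Q n" for n
  proof (induction n)
    case 0 then show ?case using q0 q1 by simp
  next
    case (Suc n)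
    then have a: "r * Q n \<le> Q (Suc n)" and b: "0 < Q n" by auto
    have p: "0 < Q (Suc n)" using a b r by (smt (verit) mult_pos_pos)
    have "r * Q (Suc n) * Q n \<le> Q (Suc n) * Q (Suc n)"
      using a p by (simp add: mult.commute mult.left_commute mult_left_mono)
    also have "\<dots> \<le> Q (Suc (Suc n)) * Q n" using cs[of n] by (simp add: power2_eq_square)
    finally have "r * Q (Suc n) \<le> Q (Suc (Suc n))" using b by simp
    then show ?case using p by simp
  qed
  then show ?thesis
  proof (induction n)
    case (Suc n)
    have "r ^ Suc n * Q 0 = r * (r ^ n * Q 0)" by simp
    also have "\<dots> \<le> r * Q n" using Suc r by simp
    also have "\<dots> \<le> Q (Suc n)" using Suc.prems by blast
    finally show ?case .
  qed simp
qed

lemma SUP_sq_ennreal: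
  fixes a :: "nat \<Rightarrow> ennreal"
  assumes inc: "incseq a"
  shows "(SUP L. a L)\<^sup>2 = (SUP L. (a L)\<^sup>2)"
proof (rule antisym)
  have "(SUP L. a L)\<^sup>2 = (SUP i. SUP j. a j * a i)"
    by (simp add: power2_eq_square SUP_mult_left_ennreal SUP_mult_right_ennreal)
  also have "\<dots> \<le> (SUP L. (a L)\<^sup>2)"
  proof (intro SUP_least)
    fix i j
    have "a j * a i \<le> a (max i j) * a (max i j)"
      using inc by (intro mult_mono) (auto simp: incseq_def)
    also have "\<dots> \<le> (SUP L. (a L)\<^sup>2)" by (intro SUP_upper2[of "max i j"]) (auto simp: power2_eq_square)
    finally show "a j * a i \<le> (SUP L. (a L)\<^sup>2)" .
  qed
  finally show "(SUP L. a L)\<^sup>2 \<le> (SUP L. (a L)\<^sup>2)" .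
next
  show "(SUP L. (a L)\<^sup>2) \<le> (SUP L. a L)\<^sup>2"
    by (intro SUP_least power_mono SUP_upper) auto
qed

lemma SUP_min_nat: "(SUP L::nat. ennreal (min a (real L))) = ennreal a"
proof (rule antisym)
  show "(SUP L::nat. ennreal (min a (real L))) \<le> ennreal a"
    by (intro SUP_least ennreal_leI) auto
  obtain L :: nat where "a \<le> real L" using real_nat_ceiling_ge by blast
  then show "ennreal a \<le> (SUP L::nat. ennreal (min a (real L)))"
    by (intro SUP_upper2[of L]) auto
qed

lemma sq_sum_le_ennreal: "((a::ennreal) + b)\<^sup>2 \<le> 2 * a\<^sup>2 + 2 * b\<^sup>2"
proof -
  have "(a + b)\<^sup>2 = a\<^sup>2 + b\<^sup>2 + 2 * a * b" by (rule power2_sum)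
  also have "\<dots> \<le> a\<^sup>2 + b\<^sup>2 + (a\<^sup>2 + b\<^sup>2)" by (intro add_left_mono sum_of_squares_ge_ennreal)
  finally show ?thesis by (simp add: algebra_simps mult_2)
qed

lemma min_plus_minus_ennreal: "(a::ennreal) = min a c + (a - c)"
proof (cases "a \<le> c")
  case True
  show ?thesis
  proof (cases "a = \<infinity>")
    case False
    then have "a - c = 0" using True by (simp add: diff_eq_0_iff_ennreal less_top)
    then show ?thesis using True by simp
  qed (simp add: top_unique True)
next
  case False then show ?thesis by (simp add: add_diff_inverse_ennreal)
qed

lemma trunc_real_ineq:
  fixes a b L :: real
  shows "(max 0 (a - L))\<^sup>2 \<le> 2 * (max 0 (b - L))\<^sup>2 + 2 * (a - b)\<^sup>2"
proof -
  have "max 0 (a - L) \<le> max 0 (b - L) + \<bar>a - b\<bar>" by auto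
  then have "(max 0 (a - L))\<^sup>2 \<le> (max 0 (b - L) + \<bar>a - b\<bar>)\<^sup>2" by (intro power_mono) auto
  also have "\<dots> \<le> 2 * (max 0 (b - L))\<^sup>2 + 2 * (a - b)\<^sup>2"
  proof -
    have id: "(p + q)\<^sup>2 + (p - q)\<^sup>2 = 2 * p\<^sup>2 + 2 * q\<^sup>2" for p q :: real
      by (simp add: power2_eq_square algebra_simps)
    have "0 \<le> (max 0 (b - L) - \<bar>a - b\<bar>)\<^sup>2" by (rule zero_le_power2)
    moreover have "\<bar>a - b\<bar>\<^sup>2 = (a - b)\<^sup>2" by (rule power2_abs)
    ultimately show ?thesis using id[of "max 0 (b - L)" "\<bar>a - b\<bar>"] by linarith
  qed
  finally show ?thesis .
qed

lemma half_eighth: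
  fixes Y :: ennreal
  assumes ineq: "ennreal (1/2) \<le> 2 * Y + 2 * ennreal (1/8)"
  shows "ennreal (1/8) \<le> Y"
proof (cases Y)
  case (real X)
  have e1: "2 * ennreal X = ennreal (2 * X)" using ennreal_mult[of 2 X] real by simp
  have e2: "2 * ennreal (1/8) = ennreal (1/4)" using ennreal_mult[of 2 "1/8"] by simp
  have e3: "ennreal (2 * X) + ennreal (1/4) = ennreal (2 * X + 2 * (1/8))"
    using ennreal_plus[of "2 * X" "1/4"] real by simp
  have "ennreal (1/2) \<le> 2 * ennreal X + 2 * ennreal (1/8)"
    using ineq real by (simp only:)
  then have "ennreal (1/2) \<le> ennreal (2 * X + 2 * (1/8))"
    by (simp only: e1 e2 e3)
  then have "1/2 \<le> 2 * X + 2 * (1/8)" using real ennreal_le_iff[of "2 * X + 2 * (1/8)" "1/2"] by linarith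
  then have "1/8 \<le> X" by linarith
  then have "ennreal (1/8) \<le> ennreal X" by (rule ennreal_leI)
  then show ?thesis using real by simp
qed simp

locale kern =
  fixes M :: "'a measure" and k :: "'a \<Rightarrow> 'a \<Rightarrow> real"
  assumes ts: "type_space M" and ker: "is_kernel M k"
begin

lemma fin_meas: "finite_measure M"
  using ts unfolding type_space_def by (intro finite_measureI) auto

sublocale finite_measure M by (rule fin_meas)

sublocale P: pair_sigma_finite M M
  by (simp add: pair_sigma_finite_def sigma_finite_measure_axioms)

lemma k_meas[measurable]: "case_prod k \<in> borel_measurable (M \<Otimes>\<^sub>M M)"
proof -
  have "case_prod k = (\<lambda>z. k (fst z) (snd z))" by (auto simp: fun_eq_iff)
  then show ?thesis using ker unfolding is_kernel_def by simp
qed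

lemma k_nonneg: "x \<in> space M \<Longrightarrow> y \<in> space M \<Longrightarrow> 0 \<le> k x y"
  using ker unfolding is_kernel_def by auto

lemma k_sym: "x \<in> space M \<Longrightarrow> y \<in> space M \<Longrightarrow> k x y = k y x"
  using ker unfolding is_kernel_def by auto

definition Tk :: "('a \<Rightarrow> ennreal) \<Rightarrow> 'a \<Rightarrow> ennreal" where
  "Tk u = (\<lambda>x. \<integral>\<^sup>+ y. ennreal (k x y) * u y \<partial>M)"

definition Tn :: "nat \<Rightarrow> ('a \<Rightarrow> ennreal) \<Rightarrow> 'a \<Rightarrow> ennreal" where
  "Tn n = Tk ^^ n"

lemma Tk_meas[measurable]:
  assumes [measurable]: "u \<in> borel_measurable M" shows "Tk u \<in> borel_measurable M"
  unfolding Tk_def by measurable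

lemma Tn_0[simp]: "Tn 0 u = u" by (simp add: Tn_def)
lemma Tn_Suc: "Tn (Suc n) u = Tk (Tn n u)" by (simp add: Tn_def)

lemma Tn_meas[measurable]: "u \<in> borel_measurable M \<Longrightarrow> Tn n u \<in> borel_measurable M"
  by (induction n) (auto simp: Tn_Suc)

lemma k_sec[measurable]: "x \<in> space M \<Longrightarrow> k x \<in> borel_measurable M"
  using measurable_Pair2[OF k_meas, of x] by simp

lemma ksec_mult[measurable]:
  assumes x: "x \<in> space M" and [measurable]: "u \<in> borel_measurable M"
  shows "(\<lambda>y. ennreal (k x y) * u y) \<in> borel_measurable M"
proof -
  have [measurable]: "k x \<in> borel_measurable M" using x by (rule k_sec)
  show ?thesis by measurable
qed

lemma selfadj:
  assumes [measurable]: "u \<in> borel_measurable M" "v \<in> borel_measurable M"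
  shows "(\<integral>\<^sup>+x. Tk u x * v x \<partial>M) = (\<integral>\<^sup>+x. u x * Tk v x \<partial>M)"
proof -
  have "(\<integral>\<^sup>+x. Tk u x * v x \<partial>M) = (\<integral>\<^sup>+x. \<integral>\<^sup>+y. ennreal (k x y) * u y * v x \<partial>M \<partial>M)"
    unfolding Tk_def by (intro nn_integral_cong) (simp add: nn_integral_multc)
  also have "\<dots> = (\<integral>\<^sup>+y. \<integral>\<^sup>+x. ennreal (k x y) * u y * v x \<partial>M \<partial>M)"
    by (rule P.Fubini'[symmetric]) measurable
  also have "\<dots> = (\<integral>\<^sup>+y. \<integral>\<^sup>+x. u y * (ennreal (k y x) * v x) \<partial>M \<partial>M)"
    by (intro nn_integral_cong) (simp add: k_sym mult_ac)
  also have "\<dots> = (\<integral>\<^sup>+x. u x * Tk v x \<partial>M)"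
    unfolding Tk_def by (intro nn_integral_cong nn_integral_cmult ksec_mult) auto
  finally show ?thesis .
qed

lemma Tn_selfadj:
  assumes [measurable]: "u \<in> borel_measurable M" "w \<in> borel_measurable M"
  shows "(\<integral>\<^sup>+x. Tn (a + n) u x * w x \<partial>M) = (\<integral>\<^sup>+x. Tn a u x * Tn n w x \<partial>M)"
proof (induction n arbitrary: a)
  case 0 then show ?case by simp
next
  case (Suc n)
  have "(\<integral>\<^sup>+x. Tn (a + Suc n) u x * w x \<partial>M) = (\<integral>\<^sup>+x. Tn (Suc a + n) u x * w x \<partial>M)" by simp
  also have "\<dots> = (\<integral>\<^sup>+x. Tn (Suc a) u x * Tn n w x \<partial>M)" by (rule Suc)
  also have "\<dots> = (\<integral>\<^sup>+x. Tn a u x * Tn (Suc n) w x \<partial>M)"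
    unfolding Tn_Suc by (rule selfadj) measurable
  finally show ?case .
qed

lemma gen_mean_Tn: "gen_mean M k n = Tn n (\<lambda>_. 1)"
  by (induction n) (auto simp: Tn_Suc Tk_def fun_eq_iff)

lemma Tk_cong: "(\<And>y. y \<in> space M \<Longrightarrow> u y = v y) \<Longrightarrow> Tk u = Tk v"
  unfolding Tk_def by (auto simp: fun_eq_iff intro!: nn_integral_cong)

lemma Tk_add:
  assumes [measurable]: "u \<in> borel_measurable M" "v \<in> borel_measurable M" and x: "x \<in> space M"
  shows "Tk (\<lambda>x. u x + v x) x = Tk u x + Tk v x"
  unfolding Tk_def using x by (auto simp: distrib_left intro!: nn_integral_add)

lemma Tn_add:
  assumes [measurable]: "u \<in> borel_measurable M" "v \<in> borel_measurable M"
  shows "x \<in> space M \<Longrightarrow> Tn n (\<lambda>x. u x + v x) x = Tn n u x + Tn n v x"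
proof (induction n arbitrary: x)
  case (Suc n)
  have "Tk (Tn n (\<lambda>x. u x + v x)) = Tk (\<lambda>x. Tn n u x + Tn n v x)"
    by (rule Tk_cong) (simp add: Suc)
  then show ?case using Suc.prems by (simp add: Tn_Suc Tk_add)
qed simp

lemma Tk_cmult: assumes [measurable]: "u \<in> borel_measurable M" and x: "x \<in> space M"
  shows "Tk (\<lambda>x. c * u x) x = c * Tk u x"
proof -
  have "(\<integral>\<^sup>+ y. c * (ennreal (k x y) * u y) \<partial>M) = c * (\<integral>\<^sup>+ y. ennreal (k x y) * u y \<partial>M)"
    using x by (intro nn_integral_cmult) measurable
  then show ?thesis unfolding Tk_def by (simp add: mult_ac)
qed

lemma Tn_cmult:
  assumes [measurable]: "u \<in> borel_measurable M"
  shows "x \<in> space M \<Longrightarrow> Tn n (\<lambda>x. c * u x) x = c * Tn n u x"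
proof (induction n arbitrary: x)
  case (Suc n)
  have "Tk (Tn n (\<lambda>x. c * u x)) = Tk (\<lambda>x. c * Tn n u x)"
    by (rule Tk_cong) (simp add: Suc)
  then show ?case using Suc.prems by (simp add: Tn_Suc Tk_cmult)
qed simp

lemma Tk_mono: "(\<And>y. y \<in> space M \<Longrightarrow> u y \<le> v y) \<Longrightarrow> Tk u x \<le> Tk v x"
  unfolding Tk_def by (auto intro!: nn_integral_mono mult_left_mono)

lemma Tn_mono: "(\<And>y. y \<in> space M \<Longrightarrow> u y \<le> v y) \<Longrightarrow> x \<in> space M \<Longrightarrow> Tn n u x \<le> Tn n v x"
  by (induction n arbitrary: x) (auto simp: Tn_Suc intro!: Tk_mono)

lemma sq_Tn1: "(\<integral>\<^sup>+x. (Tn n (\<lambda>_. 1) x)\<^sup>2 \<partial>M) = (\<integral>\<^sup>+x. Tn (n + n) (\<lambda>_. 1) x \<partial>M)"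
  using Tn_selfadj[of "\<lambda>_. 1" "\<lambda>_. 1" n n] by (simp add: power2_eq_square)

lemma E_eq: "(\<integral>\<^sup>+x. expected_size M k x \<partial>M) = (\<Sum>m. \<integral>\<^sup>+x. Tn m (\<lambda>_. 1) x \<partial>M)"
proof -
  have "(\<integral>\<^sup>+x. expected_size M k x \<partial>M) = (\<integral>\<^sup>+x. (\<Sum>m. Tn m (\<lambda>_. 1) x) \<partial>M)"
    unfolding expected_size_def gen_mean_Tn ..
  also have "\<dots> = (\<Sum>m. \<integral>\<^sup>+x. Tn m (\<lambda>_. 1) x \<partial>M)" by (rule nn_integral_suminf) measurable
  finally show ?thesis .
qed

lemma chi_top_iff: "chi M k = \<infinity> \<longleftrightarrow> (\<integral>\<^sup>+x. expected_size M k x \<partial>M) = \<infinity>"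
proof -
  have "emeasure M (space M) \<noteq> \<infinity>" "emeasure M (space M) \<noteq> 0"
    using ts unfolding type_space_def by auto
  then show ?thesis unfolding chi_def by (simp add: ennreal_divide_eq_top_iff)
qed

lemma chi_fin: assumes "chi M k \<noteq> \<infinity>" shows "(\<integral>\<^sup>+x. (Tn n (\<lambda>_. 1) x)\<^sup>2 \<partial>M) \<noteq> \<infinity>"
proof -
  have "(\<integral>\<^sup>+x. (Tn n (\<lambda>_. 1) x)\<^sup>2 \<partial>M) = (\<integral>\<^sup>+x. Tn (n + n) (\<lambda>_. 1) x \<partial>M)" by (rule sq_Tn1)
  also have "\<dots> \<le> (\<Sum>m. \<integral>\<^sup>+x. Tn m (\<lambda>_. 1) x \<partial>M)"
    using sum_le_suminf[of "\<lambda>m. \<integral>\<^sup>+x. Tn m (\<lambda>_. 1) x \<partial>M" "{n+n}"] by auto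
  finally have le: "(\<integral>\<^sup>+x. (Tn n (\<lambda>_. 1) x)\<^sup>2 \<partial>M) \<le> (\<Sum>m. \<integral>\<^sup>+x. Tn m (\<lambda>_. 1) x \<partial>M)" .
  have "(\<Sum>m. \<integral>\<^sup>+x. Tn m (\<lambda>_. 1) x \<partial>M) \<noteq> \<infinity>" using assms chi_top_iff E_eq by simp
  with le show ?thesis by (auto simp: top_unique)
qed

lemma chi_inf:
  assumes h: "\<And>n. c \<le> ennreal K * (\<integral>\<^sup>+x. (Tn n (\<lambda>_. 1) x)\<^sup>2 \<partial>M)" and c: "c \<noteq> 0"
  shows "chi M k = \<infinity>"
proof -
  define a where "a m = (\<integral>\<^sup>+x. Tn m (\<lambda>_. 1) x \<partial>M)" for m
  have E: "(\<integral>\<^sup>+x. expected_size M k x \<partial>M) = (\<Sum>m. a m)"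
    unfolding a_def by (rule E_eq)
  have "of_nat N * c \<le> ennreal K * (\<Sum>m. a m)" for N
  proof -
    have "of_nat N * c = (\<Sum>j<N. c)" by simp
    also have "\<dots> \<le> (\<Sum>j<N. ennreal K * a (2 * j))"
      using h sq_Tn1 by (intro sum_mono) (simp add: a_def mult_2)
    also have "\<dots> = ennreal K * sum a ((\<lambda>j. 2 * j) ` {..<N})"
      by (subst sum.reindex) (auto simp: inj_on_def sum_distrib_left)
    also have "\<dots> \<le> ennreal K * sum a {..<2 * N}"
      by (intro mult_left_mono sum_mono2) auto
    also have "\<dots> \<le> ennreal K * (\<Sum>m. a m)"
      by (intro mult_left_mono sum_le_suminf) auto
    finally show ?thesis .
  qed
  then have "ennreal K * (\<Sum>m. a m) = \<infinity>"
    using c by (rule ennreal_unbounded)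
  then have "(\<Sum>m. a m) = \<infinity>" by (auto simp: ennreal_mult_eq_top_iff)
  then show ?thesis unfolding chi_top_iff E .
qed

lemma Tn_cs:
  assumes [measurable]: "g \<in> borel_measurable M"
  shows "(\<integral>\<^sup>+x. (Tn (Suc n) g x)\<^sup>2 \<partial>M)\<^sup>2
     \<le> (\<integral>\<^sup>+x. (Tn (Suc (Suc n)) g x)\<^sup>2 \<partial>M) * (\<integral>\<^sup>+x. (Tn n g x)\<^sup>2 \<partial>M)"
proof -
  have "(\<integral>\<^sup>+x. (Tn (Suc n) g x)\<^sup>2 \<partial>M) = (\<integral>\<^sup>+x. Tn (Suc n + 1) g x * Tn n g x \<partial>M)"
    using Tn_selfadj[of g "Tn n g" "Suc n" 1] by (simp add: power2_eq_square Tn_Suc)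
  also have "\<dots> = (\<integral>\<^sup>+x. Tn (Suc (Suc n)) g x * Tn n g x \<partial>M)" by simp
  finally have e: "(\<integral>\<^sup>+x. (Tn (Suc n) g x)\<^sup>2 \<partial>M) = \<dots>" .
  show ?thesis unfolding e by (rule Cauchy_Schwarz_nn_integral) measurable
qed

lemma Tn_growth:
  assumes [measurable]: "g \<in> borel_measurable M"
    and fin: "\<And>n. (\<integral>\<^sup>+x. (Tn n g x)\<^sup>2 \<partial>M) \<noteq> \<infinity>"
    and pos: "(\<integral>\<^sup>+x. (g x)\<^sup>2 \<partial>M) \<noteq> 0" and r: "0 < r"
    and q1: "ennreal r * (\<integral>\<^sup>+x. (g x)\<^sup>2 \<partial>M) \<le> (\<integral>\<^sup>+x. (Tk g x)\<^sup>2 \<partial>M)"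
  shows "ennreal (r ^ n) * (\<integral>\<^sup>+x. (g x)\<^sup>2 \<partial>M) \<le> (\<integral>\<^sup>+x. (Tn n g x)\<^sup>2 \<partial>M)"
proof -
  define Q where "Q n = enn2real (\<integral>\<^sup>+x. (Tn n g x)\<^sup>2 \<partial>M)" for n
  have QE: "(\<integral>\<^sup>+x. (Tn n g x)\<^sup>2 \<partial>M) = ennreal (Q n)" for n
    using fin[of n] unfolding Q_def by (simp add: less_top)
  have nn: "0 \<le> Q n" for n unfolding Q_def by simp
  have cs: "(Q (Suc n))\<^sup>2 \<le> Q (Suc (Suc n)) * Q n" for n
  proof -
    have "ennreal ((Q (Suc n))\<^sup>2) \<le> ennreal (Q (Suc (Suc n)) * Q n)"
      using Tn_cs[of g n] unfolding QE using nn by (simp add: ennreal_mult' ennreal_power)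
    then show ?thesis using nn by (simp add: ennreal_le_iff)
  qed
  have g0: "(\<integral>\<^sup>+x. (g x)\<^sup>2 \<partial>M) = ennreal (Q 0)" using QE[of 0] by simp
  have q0: "0 < Q 0" using pos nn[of 0] g0 by (auto simp: less_le)
  have "ennreal (r * Q 0) \<le> ennreal (Q 1)"
    using q1 QE[of 1] g0 r nn[of 0] by (simp add: Tn_Suc ennreal_mult)
  then have "r * Q 0 \<le> Q 1" using nn by (simp add: ennreal_le_iff)
  from logconv_real[OF nn cs q0 r this] have "r ^ n * Q 0 \<le> Q n" .
  then show ?thesis unfolding QE g0 using r nn[of 0] by (simp add: ennreal_mult[symmetric] ennreal_leI)
qed

lemma Tn_bounded:
  assumes [measurable]: "g \<in> borel_measurable M" and L0: "0 \<le> L" and b: "\<And>x. x \<in> space M \<Longrightarrow> g x \<le> ennreal L"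
  shows "(\<integral>\<^sup>+x. (Tn n g x)\<^sup>2 \<partial>M) \<le> ennreal (L\<^sup>2) * (\<integral>\<^sup>+x. (Tn n (\<lambda>_. 1) x)\<^sup>2 \<partial>M)"
proof -
  have "(\<integral>\<^sup>+x. (Tn n g x)\<^sup>2 \<partial>M) \<le> (\<integral>\<^sup>+x. ennreal (L\<^sup>2) * (Tn n (\<lambda>_. 1) x)\<^sup>2 \<partial>M)"
  proof (intro nn_integral_mono)
    fix x assume x: "x \<in> space M"
    have "Tn n g x \<le> Tn n (\<lambda>x. ennreal L * 1) x" using b x by (intro Tn_mono) auto
    also have "\<dots> = ennreal L * Tn n (\<lambda>_. 1) x" using x Tn_cmult[where u="\<lambda>_. 1" and c="ennreal L"] by simp
    finally have "(Tn n g x)\<^sup>2 \<le> (ennreal L * Tn n (\<lambda>_. 1) x)\<^sup>2" by (rule power_mono) simp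
    also have "\<dots> = ennreal (L\<^sup>2) * (Tn n (\<lambda>_. 1) x)\<^sup>2"
      using L0 by (simp add: power_mult_distrib ennreal_power)
    finally show "(Tn n g x)\<^sup>2 \<le> ennreal (L\<^sup>2) * (Tn n (\<lambda>_. 1) x)\<^sup>2" .
  qed
  also have "\<dots> = ennreal (L\<^sup>2) * (\<integral>\<^sup>+x. (Tn n (\<lambda>_. 1) x)\<^sup>2 \<partial>M)"
    by (rule nn_integral_cmult) measurable
  finally show ?thesis .
qed

lemma trunc_approx:
  assumes [measurable]: "f \<in> borel_measurable M"
    and gt: "c < (\<integral>\<^sup>+x. (Tk (\<lambda>y. ennreal (f y)) x)\<^sup>2 \<partial>M)"
  shows "\<exists>L::nat. c < (\<integral>\<^sup>+x. (Tk (\<lambda>y. ennreal (min (f y) (real L))) x)\<^sup>2 \<partial>M)"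
proof -
  define h where "h L y = ennreal (min (f y) (real L))" for L :: nat and y
  have hm[measurable]: "h L \<in> borel_measurable M" for L unfolding h_def by measurable
  have hinc: "h L y \<le> h L' y" if "L \<le> L'" for L L' y
    using that unfolding h_def by (intro ennreal_leI) auto
  have TkS: "Tk (\<lambda>y. ennreal (f y)) x = (SUP L. Tk (h L) x)" if x: "x \<in> space M" for x
  proof -
    have "Tk (\<lambda>y. ennreal (f y)) x = (\<integral>\<^sup>+ y. (SUP L. ennreal (k x y) * h L y) \<partial>M)"
      unfolding Tk_def h_def by (simp add: SUP_min_nat SUP_mult_left_ennreal[symmetric])
    also have "\<dots> = (SUP L. \<integral>\<^sup>+ y. ennreal (k x y) * h L y \<partial>M)"
      using x by (intro nn_integral_monotone_convergence_SUP)
        (auto simp: incseq_def le_fun_def hinc intro!: mult_left_mono)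
    finally show ?thesis unfolding Tk_def .
  qed
  have inc: "incseq (\<lambda>L x. (Tk (h L) x)\<^sup>2)"
    by (auto simp: incseq_def le_fun_def hinc intro!: power_mono Tk_mono)
  have "(\<integral>\<^sup>+x. (Tk (\<lambda>y. ennreal (f y)) x)\<^sup>2 \<partial>M) = (\<integral>\<^sup>+x. (SUP L. (Tk (h L) x)\<^sup>2) \<partial>M)"
  proof (intro nn_integral_cong)
    fix x assume x: "x \<in> space M"
    then show "(Tk (\<lambda>y. ennreal (f y)) x)\<^sup>2 = (SUP L. (Tk (h L) x)\<^sup>2)"
      unfolding TkS[OF x] by (intro SUP_sq_ennreal) (auto simp: incseq_def hinc intro!: Tk_mono)
  qed
  also have "\<dots> = (SUP L. \<integral>\<^sup>+x. (Tk (h L) x)\<^sup>2 \<partial>M)"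
    using inc by (intro nn_integral_monotone_convergence_SUP) auto
  finally have "\<exists>L. c < (\<integral>\<^sup>+x. (Tk (h L) x)\<^sup>2 \<partial>M)" using gt by (simp add: less_SUP_iff)
  moreover have "h L = (\<lambda>y. ennreal (min (f y) (real L)))" for L by (simp add: h_def fun_eq_iff)
  ultimately show ?thesis by simp
qed

lemma Tnn_Tk: "T_nn M k f = Tk (\<lambda>y. ennreal (f y))"
  unfolding T_nn_def Tk_def by (simp add: fun_eq_iff)

lemma enn_sqrt_gt1: "1 < enn_sqrt a \<Longrightarrow> 1 < a"
  unfolding enn_sqrt_def
  by (cases a) (auto split: if_splits simp: ennreal_less_iff)

lemma Tk_zero:
  assumes [measurable]: "g \<in> borel_measurable M" and z: "(\<integral>\<^sup>+x. (g x)\<^sup>2 \<partial>M) = 0"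
  shows "(\<integral>\<^sup>+x. (Tk g x)\<^sup>2 \<partial>M) = 0"
proof -
  have "AE x in M. (g x)\<^sup>2 = 0" using z by (subst (asm) nn_integral_0_iff_AE) auto
  then have ae: "AE y in M. g y = 0" by auto
  have "Tk g x = 0" if x: "x \<in> space M" for x
    unfolding Tk_def using x ae by (subst nn_integral_0_iff_AE) (auto elim!: AE_mp)
  then show ?thesis by (simp cong: nn_integral_cong)
qed

lemma supercrit: assumes "supercritical M k" shows "chi M k = \<infinity>"
proof (rule ccontr)
  assume chifin: "chi M k \<noteq> \<infinity>"
  let ?F = "{f. f \<in> borel_measurable M \<and> (\<forall>x\<in>space M. 0 \<le> f x) \<and> (\<integral>\<^sup>+ x. ennreal ((f x)\<^sup>2) \<partial>M) \<le> 1}"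
  have "1 < T_norm M k" using assms unfolding supercritical_def .
  then obtain f where f: "f \<in> ?F" and f1: "1 < L2norm_enn M (T_nn M k f)"
    unfolding T_norm_def by (auto simp: less_SUP_iff)
  have [measurable]: "f \<in> borel_measurable M" and fnn: "\<And>x. x \<in> space M \<Longrightarrow> 0 \<le> f x"
    and f2: "(\<integral>\<^sup>+ x. ennreal ((f x)\<^sup>2) \<partial>M) \<le> 1" using f by auto
  have "1 < (\<integral>\<^sup>+x. (Tk (\<lambda>y. ennreal (f y)) x)\<^sup>2 \<partial>M)"
    using f1 unfolding L2norm_enn_def Tnn_Tk by (rule enn_sqrt_gt1)
  from trunc_approx[OF _ this] obtain L :: nat where
    L: "1 < (\<integral>\<^sup>+x. (Tk (\<lambda>y. ennreal (min (f y) (real L))) x)\<^sup>2 \<partial>M)" by auto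
  define g where "g y = ennreal (min (f y) (real L))" for y
  have gm[measurable]: "g \<in> borel_measurable M" unfolding g_def by measurable
  have gf: "g = (\<lambda>y. ennreal (min (f y) (real L)))" by (simp add: g_def fun_eq_iff)
  have L': "1 < (\<integral>\<^sup>+x. (Tk g x)\<^sup>2 \<partial>M)" using L gf by simp
  have g2: "(\<integral>\<^sup>+x. (g x)\<^sup>2 \<partial>M) \<le> 1"
  proof -
    have "(\<integral>\<^sup>+x. (g x)\<^sup>2 \<partial>M) \<le> (\<integral>\<^sup>+ x. ennreal ((f x)\<^sup>2) \<partial>M)"
    proof (intro nn_integral_mono)
      fix x assume x: "x \<in> space M"
      have "(g x)\<^sup>2 = ennreal ((min (f x) (real L))\<^sup>2)" unfolding g_def using fnn[OF x]
        by (simp add: ennreal_power)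
      also have "\<dots> \<le> ennreal ((f x)\<^sup>2)" using fnn[OF x]
        by (intro ennreal_leI power_mono) auto
      finally show "(g x)\<^sup>2 \<le> ennreal ((f x)\<^sup>2)" .
    qed
    then show ?thesis using f2 by simp
  qed
  have g0: "(\<integral>\<^sup>+x. (g x)\<^sup>2 \<partial>M) \<noteq> 0" using Tk_zero[OF gm] L' by auto
  have gb: "g x \<le> ennreal (real L)" for x unfolding g_def by (intro ennreal_leI) auto
  have fin: "(\<integral>\<^sup>+x. (Tn n g x)\<^sup>2 \<partial>M) \<noteq> \<infinity>" for n
  proof -
    have "(\<integral>\<^sup>+x. (Tn n g x)\<^sup>2 \<partial>M) \<le> ennreal ((real L)\<^sup>2) * (\<integral>\<^sup>+x. (Tn n (\<lambda>_. 1) x)\<^sup>2 \<partial>M)"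
      using gb by (intro Tn_bounded) auto
    also have "\<dots> < \<infinity>" using chi_fin[OF chifin] by (simp add: ennreal_mult_less_top less_top)
    finally show ?thesis by simp
  qed
  have q1: "ennreal 1 * (\<integral>\<^sup>+x. (g x)\<^sup>2 \<partial>M) \<le> (\<integral>\<^sup>+x. (Tk g x)\<^sup>2 \<partial>M)"
    using g2 L' by simp
  have grow: "(\<integral>\<^sup>+x. (g x)\<^sup>2 \<partial>M) \<le> ennreal ((real L)\<^sup>2) * (\<integral>\<^sup>+x. (Tn n (\<lambda>_. 1) x)\<^sup>2 \<partial>M)" for n
  proof -
    have "(\<integral>\<^sup>+x. (g x)\<^sup>2 \<partial>M) \<le> (\<integral>\<^sup>+x. (Tn n g x)\<^sup>2 \<partial>M)"
      using Tn_growth[OF gm fin g0 _ q1, of n] by simp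
    also have "\<dots> \<le> ennreal ((real L)\<^sup>2) * (\<integral>\<^sup>+x. (Tn n (\<lambda>_. 1) x)\<^sup>2 \<partial>M)"
      using gb by (intro Tn_bounded) auto
    finally show ?thesis .
  qed
  have "chi M k = \<infinity>" by (rule chi_inf[OF grow g0])
  with chifin show False by simp
qed

lemma trunc_small:
  assumes G: "in_L2 M G" and e: "0 < e"
  shows "\<exists>L::nat. (\<integral>\<^sup>+x. ennreal ((max 0 (G x - real L))\<^sup>2) \<partial>M) < e"
proof -
  have [measurable]: "G \<in> borel_measurable M" using G unfolding in_L2_def by simp
  define h where "h i x = ennreal ((max 0 (G x - real i))\<^sup>2)" for i :: nat and x
  have [measurable]: "h i \<in> borel_measurable M" for i unfolding h_def by measurable
  have dec: "AE x in M. h (Suc i) x \<le> h i x" for i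
    unfolding h_def by (intro AE_I2 ennreal_leI power_mono) auto
  have "(\<integral>\<^sup>+ x. h 0 x \<partial>M) \<le> (\<integral>\<^sup>+ x. ennreal ((G x)\<^sup>2) \<partial>M)"
    unfolding h_def by (intro nn_integral_mono ennreal_leI) (auto simp: max_def power2_eq_square)
  also have "\<dots> < \<infinity>" using G unfolding in_L2_def by simp
  finally have h0: "(\<integral>\<^sup>+ x. h 0 x \<partial>M) < \<infinity>" .
  have I0: "(INF i. h i x) = 0" for x
  proof -
    obtain i :: nat where "G x \<le> real i" using real_nat_ceiling_ge by blast
    then have "h i x = 0" unfolding h_def by simp
    then show ?thesis by (metis INF_lower2 UNIV_I bot.extremum_uniqueI bot_ennreal order_refl)
  qed
  have "(INF i. integral\<^sup>N M (h i)) = 0"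
    using nn_integral_monotone_convergence_INF_AE'[OF dec _ h0] by (simp add: I0)
  then have "(INF i. integral\<^sup>N M (h i)) < e" using e by simp
  then have "\<exists>i. integral\<^sup>N M (h i) < e" by (simp add: INF_less_iff)
  then show ?thesis unfolding h_def by auto
qed

lemma enn_sqrt_le1: "enn_sqrt a \<le> 1 \<Longrightarrow> a \<le> 1"
  unfolding enn_sqrt_def by (cases a) (auto split: if_splits simp: ennreal_le_iff)

lemma enn_sqrt_gt: "ennreal b < enn_sqrt a \<Longrightarrow> 0 \<le> b \<Longrightarrow> ennreal (b\<^sup>2) < a"
  unfolding enn_sqrt_def
  apply (cases a)
   apply (auto split: if_splits simp: ennreal_less_iff)
  using power_strict_mono[of b "sqrt _" 2] by fastforce

lemma Tk_cong_AE: "AE y in M. u y = v y \<Longrightarrow> Tk u = Tk v"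
  unfolding Tk_def by (auto simp: fun_eq_iff intro!: nn_integral_cong_AE elim!: AE_mp)

lemma crit_contr:
  assumes crit: "critical M k" and [measurable]: "u \<in> borel_measurable M"
    and fin: "(\<integral>\<^sup>+x. (u x)\<^sup>2 \<partial>M) \<noteq> \<infinity>"
  shows "(\<integral>\<^sup>+x. (Tk u x)\<^sup>2 \<partial>M) \<le> (\<integral>\<^sup>+x. (u x)\<^sup>2 \<partial>M)"
proof (cases "(\<integral>\<^sup>+x. (u x)\<^sup>2 \<partial>M) = 0")
  case True then show ?thesis using Tk_zero by simp
next
  case False
  obtain a where a: "(\<integral>\<^sup>+x. (u x)\<^sup>2 \<partial>M) = ennreal a" "0 \<le> a" using fin by (cases "\<integral>\<^sup>+x. (u x)\<^sup>2 \<partial>M") auto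
  with False have apos: "0 < a" by auto
  have "AE x in M. (u x)\<^sup>2 \<noteq> \<infinity>" using fin by (intro nn_integral_PInf_AE) (auto)
  then have aeu: "AE x in M. ennreal (enn2real (u x)) = u x"
  proof (rule AE_mp, intro AE_I2 impI)
    fix x assume "(u x)\<^sup>2 \<noteq> \<infinity>"
    then have "u x \<noteq> \<infinity>" by auto
    then show "ennreal (enn2real (u x)) = u x" by (simp add: less_top)
  qed
  define s where "s = sqrt a"
  have spos: "0 < s" using apos by (simp add: s_def)
  define f where "f y = enn2real (u y) / s" for y
  have [measurable]: "f \<in> borel_measurable M" unfolding f_def by measurable
  have ef: "ennreal (f y) = ennreal (1 / s) * ennreal (enn2real (u y))" for y
    unfolding f_def using spos by (simp add: ennreal_mult[symmetric])
  have s2: "ennreal (1 / s) ^ 2 = ennreal (1 / a)"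
    using apos by (simp add: s_def ennreal_power power_divide)
  have "(\<integral>\<^sup>+ x. ennreal ((f x)\<^sup>2) \<partial>M) = (\<integral>\<^sup>+ x. ennreal (1 / a) * (u x)\<^sup>2 \<partial>M)"
  proof (intro nn_integral_cong_AE)
    show "AE x in M. ennreal ((f x)\<^sup>2) = ennreal (1 / a) * (u x)\<^sup>2"
      using aeu
    proof (rule AE_mp, intro AE_I2 impI)
      fix x assume "ennreal (enn2real (u x)) = u x"
      moreover have "ennreal ((f x)\<^sup>2) = (ennreal (f x))\<^sup>2"
        unfolding f_def using spos by (simp add: ennreal_power)
      ultimately show "ennreal ((f x)\<^sup>2) = ennreal (1 / a) * (u x)\<^sup>2"
        unfolding ef by (simp add: power_mult_distrib s2)
    qed
  qed
  also have "\<dots> = ennreal (1 / a) * ennreal a" using a by (simp add: nn_integral_cmult)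
  also have "\<dots> = 1" using apos by (simp add: ennreal_mult[symmetric])
  finally have f2: "(\<integral>\<^sup>+ x. ennreal ((f x)\<^sup>2) \<partial>M) = 1" .
  have fnn: "\<forall>x\<in>space M. 0 \<le> f x" unfolding f_def using spos by auto
  have "L2norm_enn M (T_nn M k f) \<le> T_norm M k"
    unfolding T_norm_def using f2 fnn by (intro SUP_upper) auto
  then have "L2norm_enn M (T_nn M k f) \<le> 1" using crit unfolding critical_def by simp
  then have le1: "(\<integral>\<^sup>+x. (T_nn M k f x)\<^sup>2 \<partial>M) \<le> 1"
    unfolding L2norm_enn_def by (rule enn_sqrt_le1)
  have Tf: "T_nn M k f x = ennreal (1 / s) * Tk u x" if x: "x \<in> space M" for x
  proof -
    have "T_nn M k f x = Tk (\<lambda>y. ennreal (1 / s) * ennreal (enn2real (u y))) x"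
      unfolding Tnn_Tk ef ..
    also have "\<dots> = ennreal (1 / s) * Tk (\<lambda>y. ennreal (enn2real (u y))) x"
      using x by (intro Tk_cmult) measurable
    also have "Tk (\<lambda>y. ennreal (enn2real (u y))) = Tk u" using aeu by (rule Tk_cong_AE)
    finally show ?thesis .
  qed
  have "(\<integral>\<^sup>+x. (T_nn M k f x)\<^sup>2 \<partial>M) = (\<integral>\<^sup>+x. ennreal (1 / a) * (Tk u x)\<^sup>2 \<partial>M)"
    by (intro nn_integral_cong) (simp add: Tf power_mult_distrib s2)
  also have "\<dots> = ennreal (1 / a) * (\<integral>\<^sup>+x. (Tk u x)\<^sup>2 \<partial>M)" by (rule nn_integral_cmult) measurable
  finally have "ennreal (1 / a) * (\<integral>\<^sup>+x. (Tk u x)\<^sup>2 \<partial>M) \<le> 1" using le1 by simp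
  then have "ennreal a * (ennreal (1 / a) * (\<integral>\<^sup>+x. (Tk u x)\<^sup>2 \<partial>M)) \<le> ennreal a"
    by (metis mult.right_neutral mult_left_mono zero_le)
  then show ?thesis using apos a by (simp add: ennreal_mult[symmetric] mult.assoc[symmetric])
qed

lemma crit_contr_n:
  assumes crit: "critical M k" and [measurable]: "u \<in> borel_measurable M"
    and fin: "(\<integral>\<^sup>+x. (u x)\<^sup>2 \<partial>M) \<noteq> \<infinity>"
  shows "(\<integral>\<^sup>+x. (Tn n u x)\<^sup>2 \<partial>M) \<le> (\<integral>\<^sup>+x. (u x)\<^sup>2 \<partial>M)"
proof (induction n)
  case (Suc n)
  have fn: "(\<integral>\<^sup>+x. (Tn n u x)\<^sup>2 \<partial>M) \<noteq> \<infinity>" using Suc fin by (auto simp: top_unique)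
  have "(\<integral>\<^sup>+x. (Tn (Suc n) u x)\<^sup>2 \<partial>M) \<le> (\<integral>\<^sup>+x. (Tn n u x)\<^sup>2 \<partial>M)"
    unfolding Tn_Suc by (rule crit_contr[OF crit _ fn]) measurable
  with Suc show ?case by simp
qed simp

lemma Tk_Top:
  assumes tc: "T_compact M k" and f: "in_L2 M f" and fnn: "\<And>x. x \<in> space M \<Longrightarrow> 0 \<le> f x"
  shows "AE x in M. Tk (\<lambda>y. ennreal (f y)) x = ennreal (T_op M k f x)"
proof -
  have [measurable]: "f \<in> borel_measurable M" using f unfolding in_L2_def by simp
  have "AE x in M. integrable M (\<lambda>y. k x y * f y)" using tc f unfolding T_compact_def by blast
  then show ?thesis
  proof (rule AE_mp, intro AE_I2 impI)
    fix x assume x: "x \<in> space M" and int: "integrable M (\<lambda>y. k x y * f y)"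
    have "Tk (\<lambda>y. ennreal (f y)) x = (\<integral>\<^sup>+ y. ennreal (k x y * f y) \<partial>M)"
      unfolding Tk_def using x fnn k_nonneg by (intro nn_integral_cong) (simp add: ennreal_mult)
    also have "\<dots> = ennreal (\<integral> y. k x y * f y \<partial>M)"
      using x fnn k_nonneg by (intro nn_integral_eq_integral int AE_I2) auto
    finally show "Tk (\<lambda>y. ennreal (f y)) x = ennreal (T_op M k f x)" unfolding T_op_def .
  qed
qed

lemma Tn_Tk: "Tn n (Tk u) = Tn (Suc n) u"
  unfolding Tn_def by (simp add: funpow_Suc_right del: funpow.simps)

lemma bern_half:
  fixes j n :: nat assumes "4 * n + 8 \<le> j"
  shows "1 / 2 \<le> (1 - 1 / (real j + 2)) ^ (2 * n + 4)"
proof -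
  have A: "1 + real (2 * n + 4) * (- 1 / (real j + 2)) \<le> (1 + - 1 / (real j + 2)) ^ (2 * n + 4)"
    by (rule Bernoulli_inequality) (simp add: field_simps)
  have B: "1 / 2 \<le> 1 + real (2 * n + 4) * (- 1 / (real j + 2))"
    using assms by (simp add: field_simps)
  have C: "1 - 1 / (real j + 2) = 1 + - 1 / (real j + 2)" by simp
  show ?thesis unfolding C using order_trans[OF B A] .
qed

lemma critical_case:
  assumes crit: "critical M k" and tc: "T_compact M k"
  shows "chi M k = \<infinity>"
proof -
  let ?F = "{f. f \<in> borel_measurable M \<and> (\<forall>x\<in>space M. 0 \<le> f x) \<and> (\<integral>\<^sup>+ x. ennreal ((f x)\<^sup>2) \<partial>M) \<le> 1}"
  define b where "b j = 1 - 1 / (real j + 2)" for j :: nat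
  have b0: "1 / 2 \<le> b j" and b1: "b j < 1" for j unfolding b_def by (auto simp: field_simps)
  have bpos: "0 < b j" for j using b0[of j] by simp
  have "\<exists>f. f \<in> ?F \<and> ennreal (b j) < L2norm_enn M (T_nn M k f)" for j
  proof -
    have "ennreal (b j) < T_norm M k" using crit b1[of j] unfolding critical_def by simp
    then show ?thesis unfolding T_norm_def by (simp add: less_SUP_iff Bex_def)
  qed
  then have "\<forall>j. \<exists>f. f \<in> ?F \<and> ennreal (b j) < L2norm_enn M (T_nn M k f)" by blast
  from choice[OF this] obtain F where FF: "\<forall>j. F j \<in> ?F \<and> ennreal (b j) < L2norm_enn M (T_nn M k (F j))"
    by blast
  have F: "\<And>j. F j \<in> ?F" and Fb: "\<And>j. ennreal (b j) < L2norm_enn M (T_nn M k (F j))"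
    using FF by auto
  have Fm[measurable]: "F j \<in> borel_measurable M" and Fnn: "\<And>x. x \<in> space M \<Longrightarrow> 0 \<le> F j x"
    and F2: "(\<integral>\<^sup>+ x. ennreal ((F j x)\<^sup>2) \<partial>M) \<le> 1" for j using F[of j] by simp_all
  have FL2: "in_L2 M (F j)" for j
    unfolding in_L2_def using Fm[of j] order_le_less_trans[OF F2[of j], of top] by simp
  define u where "u j y = ennreal (F j y)" for j y
  have um[measurable]: "u j \<in> borel_measurable M" for j unfolding u_def by measurable
  have u2: "(\<integral>\<^sup>+x. (u j x)\<^sup>2 \<partial>M) = (\<integral>\<^sup>+ x. ennreal ((F j x)\<^sup>2) \<partial>M)" for j
    unfolding u_def using Fnn by (intro nn_integral_cong) (simp add: ennreal_power)
  have u2le: "(\<integral>\<^sup>+x. (u j x)\<^sup>2 \<partial>M) \<le> 1" for j using u2 F2 by simp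
  have u2fin: "(\<integral>\<^sup>+x. (u j x)\<^sup>2 \<partial>M) \<noteq> \<infinity>" for j using u2le[of j] by (auto simp: top_unique)
  have uf: "u j = (\<lambda>y. ennreal (F j y))" for j by (simp add: u_def fun_eq_iff)
  have Q1: "ennreal ((b j)\<^sup>2) < (\<integral>\<^sup>+x. (Tk (u j) x)\<^sup>2 \<partial>M)" for j
    using Fb[of j] bpos[of j] unfolding L2norm_enn_def Tnn_Tk uf by (intro enn_sqrt_gt) auto
  have contr1: "(\<integral>\<^sup>+x. (Tk (u j) x)\<^sup>2 \<partial>M) \<le> (\<integral>\<^sup>+x. (u j x)\<^sup>2 \<partial>M)" for j
    by (rule crit_contr[OF crit um[of j] u2fin[of j]])
  have key: "ennreal ((b j) ^ (2 * n + 4)) \<le> (\<integral>\<^sup>+x. (Tn (Suc n) (u j) x)\<^sup>2 \<partial>M)" for j n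
  proof -
    have fin: "(\<integral>\<^sup>+x. (Tn m (u j) x)\<^sup>2 \<partial>M) \<noteq> \<infinity>" for m
      using crit_contr_n[OF crit um[of j] u2fin[of j], of m] u2fin[of j] by (auto simp: top_unique)
    have pos: "(\<integral>\<^sup>+x. (u j x)\<^sup>2 \<partial>M) \<noteq> 0"
      using Tk_zero[OF um, of j] Q1[of j] by auto
    have r: "0 < (b j)\<^sup>2" using bpos[of j] by simp
    have q1: "ennreal ((b j)\<^sup>2) * (\<integral>\<^sup>+x. (u j x)\<^sup>2 \<partial>M) \<le> (\<integral>\<^sup>+x. (Tk (u j) x)\<^sup>2 \<partial>M)"
    proof -
      have "ennreal ((b j)\<^sup>2) * (\<integral>\<^sup>+x. (u j x)\<^sup>2 \<partial>M) \<le> ennreal ((b j)\<^sup>2) * 1"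
        using u2le[of j] by (intro mult_left_mono) auto
      then show ?thesis using Q1[of j] by simp
    qed
    have "ennreal (((b j)\<^sup>2) ^ Suc n) * (\<integral>\<^sup>+x. (u j x)\<^sup>2 \<partial>M) \<le> (\<integral>\<^sup>+x. (Tn (Suc n) (u j) x)\<^sup>2 \<partial>M)"
      by (rule Tn_growth[OF um fin pos r q1])
    moreover have "ennreal ((b j) ^ (2 * n + 4)) \<le> ennreal (((b j)\<^sup>2) ^ Suc n) * (\<integral>\<^sup>+x. (u j x)\<^sup>2 \<partial>M)"
    proof -
      have "ennreal ((b j) ^ (2 * n + 4)) = ennreal (((b j)\<^sup>2) ^ Suc n) * ennreal ((b j)\<^sup>2)"
      proof -
        have e: "2 * n + 4 = 2 * Suc n + 2" by simp
        have "(b j) ^ (2 * n + 4) = ((b j)\<^sup>2) ^ Suc n * (b j)\<^sup>2"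
          by (simp only: e power_add power_mult)
        then show ?thesis using bpos[of j] by (simp add: ennreal_mult[symmetric])
      qed
      also have "\<dots> \<le> ennreal (((b j)\<^sup>2) ^ Suc n) * (\<integral>\<^sup>+x. (u j x)\<^sup>2 \<partial>M)"
        using Q1[of j] contr1[of j] by (intro mult_left_mono) auto
      finally show ?thesis .
    qed
    ultimately show ?thesis by simp
  qed
  define G where "G j = T_op M k (F j)" for j
  have GL2: "in_L2 M (G j)" for j using tc FL2 unfolding T_compact_def G_def by blast
  have Gm[measurable]: "G j \<in> borel_measurable M" for j using GL2 unfolding in_L2_def by simp
  have gG: "AE x in M. Tk (u j) x = ennreal (G j x)" for j
    unfolding uf G_def by (rule Tk_Top[OF tc FL2 Fnn])
  have "\<forall>n. in_L2 M (F n) \<and> (\<integral>\<^sup>+ x. ennreal ((F n x)\<^sup>2) \<partial>M) \<le> 1" using FL2 F2 by blast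
  then obtain r :: "nat \<Rightarrow> nat" where r: "strict_mono r"
    and cauchy: "\<forall>e>0. \<exists>N::nat. \<forall>m\<ge>N. \<forall>n\<ge>N.
       (\<integral>\<^sup>+ x. ennreal ((G (r m) x - G (r n) x)\<^sup>2) \<partial>M) < ennreal e"
    using tc unfolding T_compact_def G_def by blast
  obtain N0 where N0: "\<And>m n. m \<ge> N0 \<Longrightarrow> n \<ge> N0 \<Longrightarrow>
       (\<integral>\<^sup>+ x. ennreal ((G (r m) x - G (r n) x)\<^sup>2) \<partial>M) < ennreal (1/32)"
    using cauchy[rule_format, of "1/32"] by auto
  obtain L :: nat where L: "(\<integral>\<^sup>+x. ennreal ((max 0 (G (r N0) x - real L))\<^sup>2) \<partial>M) < ennreal (1/32)"
    using trunc_small[OF GL2[of "r N0"], of "ennreal (1/32)"] by auto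
  define w where "w j x = Tk (u j) x - ennreal (real L)" for j x
  have wm[measurable]: "w j \<in> borel_measurable M" for j unfolding w_def by measurable
  have wsmall: "(\<integral>\<^sup>+x. (w (r m) x)\<^sup>2 \<partial>M) \<le> ennreal (1/8)" if m: "m \<ge> N0" for m
  proof -
    have "(\<integral>\<^sup>+x. (w (r m) x)\<^sup>2 \<partial>M) = (\<integral>\<^sup>+x. ennreal ((max 0 (G (r m) x - real L))\<^sup>2) \<partial>M)"
    proof (intro nn_integral_cong_AE)
      show "AE x in M. (w (r m) x)\<^sup>2 = ennreal ((max 0 (G (r m) x - real L))\<^sup>2)"
        using gG[of "r m"]
      proof (rule AE_mp, intro AE_I2 impI)
        fix x assume e: "Tk (u (r m)) x = ennreal (G (r m) x)"
        have "w (r m) x = ennreal (max 0 (G (r m) x - real L))"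
          unfolding w_def e by (auto simp: ennreal_minus max_def ennreal_neg)
        then show "(w (r m) x)\<^sup>2 = ennreal ((max 0 (G (r m) x - real L))\<^sup>2)"
          by (simp add: ennreal_power)
      qed
    qed
    also have "\<dots> \<le> (\<integral>\<^sup>+x. 2 * ennreal ((max 0 (G (r N0) x - real L))\<^sup>2)
                      + 2 * ennreal ((G (r m) x - G (r N0) x)\<^sup>2) \<partial>M)"
    proof (intro nn_integral_mono)
      fix x
      have "ennreal ((max 0 (G (r m) x - real L))\<^sup>2)
          \<le> ennreal (2 * (max 0 (G (r N0) x - real L))\<^sup>2 + 2 * (G (r m) x - G (r N0) x)\<^sup>2)"
        by (intro ennreal_leI trunc_real_ineq)
      also have "\<dots> = 2 * ennreal ((max 0 (G (r N0) x - real L))\<^sup>2) + 2 * ennreal ((G (r m) x - G (r N0) x)\<^sup>2)"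
        by (simp add: ennreal_plus ennreal_mult)
      finally show "ennreal ((max 0 (G (r m) x - real L))\<^sup>2)
          \<le> 2 * ennreal ((max 0 (G (r N0) x - real L))\<^sup>2) + 2 * ennreal ((G (r m) x - G (r N0) x)\<^sup>2)" .
    qed
    also have "\<dots> = 2 * (\<integral>\<^sup>+x. ennreal ((max 0 (G (r N0) x - real L))\<^sup>2) \<partial>M)
                    + 2 * (\<integral>\<^sup>+x. ennreal ((G (r m) x - G (r N0) x)\<^sup>2) \<partial>M)"
      by (simp add: nn_integral_add nn_integral_cmult)
    also have "\<dots> \<le> 2 * ennreal (1/32) + 2 * ennreal (1/32)"
      using L N0[OF m order_refl] by (intro add_mono mult_left_mono) auto
    also have "\<dots> = ennreal (1/8)"
    proof -
      have "2 * ennreal (1 / 32) = ennreal (1/16)" using ennreal_mult[of 2 "1/32"] by simp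
      moreover have "ennreal (1/16) + ennreal (1/16) = ennreal (1/8)" using ennreal_plus[of "1/16" "1/16"] by simp
      ultimately show ?thesis by simp
    qed
    finally show ?thesis .
  qed
  have low: "ennreal (1/8) \<le> ennreal ((real L)\<^sup>2) * (\<integral>\<^sup>+x. (Tn n (\<lambda>_. 1) x)\<^sup>2 \<partial>M)" for n
  proof -
    define m where "m = max N0 (4 * n + 8)"
    define j where "j = r m"
    have mN: "m \<ge> N0" unfolding m_def by simp
    have jb: "4 * n + 8 \<le> j" unfolding j_def m_def using seq_suble[OF r, of "max N0 (4 * n + 8)"] by simp
    let ?g = "Tk (u j)"
    define v where "v x = min (?g x) (ennreal (real L))" for x
    have vm[measurable]: "v \<in> borel_measurable M" unfolding v_def by measurable
    have gdec: "?g = (\<lambda>x. v x + w j x)"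
      unfolding v_def w_def by (simp add: fun_eq_iff min_plus_minus_ennreal[symmetric])
    have wfin: "(\<integral>\<^sup>+x. (w j x)\<^sup>2 \<partial>M) \<noteq> \<infinity>"
      using wsmall[OF mN] unfolding j_def by (auto simp: top_unique)
    have "ennreal (1/2) \<le> ennreal ((b j) ^ (2 * n + 4))"
      unfolding b_def by (intro ennreal_leI bern_half jb)
    also have "\<dots> \<le> (\<integral>\<^sup>+x. (Tn (Suc n) (u j) x)\<^sup>2 \<partial>M)" by (rule key)
    also have "\<dots> = (\<integral>\<^sup>+x. (Tn n (\<lambda>x. v x + w j x) x)\<^sup>2 \<partial>M)"
      unfolding Tn_Tk[symmetric] gdec ..
    also have "\<dots> = (\<integral>\<^sup>+x. (Tn n v x + Tn n (w j) x)\<^sup>2 \<partial>M)"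
      by (intro nn_integral_cong) (simp add: Tn_add)
    also have "\<dots> \<le> (\<integral>\<^sup>+x. 2 * (Tn n v x)\<^sup>2 + 2 * (Tn n (w j) x)\<^sup>2 \<partial>M)"
      by (intro nn_integral_mono sq_sum_le_ennreal)
    also have "\<dots> = 2 * (\<integral>\<^sup>+x. (Tn n v x)\<^sup>2 \<partial>M) + 2 * (\<integral>\<^sup>+x. (Tn n (w j) x)\<^sup>2 \<partial>M)"
      by (simp add: nn_integral_add nn_integral_cmult)
    also have "\<dots> \<le> 2 * (\<integral>\<^sup>+x. (Tn n v x)\<^sup>2 \<partial>M) + 2 * ennreal (1/8)"
    proof -
      have "(\<integral>\<^sup>+x. (Tn n (w j) x)\<^sup>2 \<partial>M) \<le> (\<integral>\<^sup>+x. (w j x)\<^sup>2 \<partial>M)"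
        by (rule crit_contr_n[OF crit wm wfin])
      also have "\<dots> \<le> ennreal (1/8)" using wsmall[OF mN] unfolding j_def .
      finally show ?thesis by (intro add_left_mono mult_left_mono) auto
    qed
    finally have ineq: "ennreal (1/2) \<le> 2 * (\<integral>\<^sup>+x. (Tn n v x)\<^sup>2 \<partial>M) + 2 * ennreal (1/8)" .
    have X: "ennreal (1/8) \<le> (\<integral>\<^sup>+x. (Tn n v x)\<^sup>2 \<partial>M)"
      using ineq by (rule half_eighth)
    also have "\<dots> \<le> ennreal ((real L)\<^sup>2) * (\<integral>\<^sup>+x. (Tn n (\<lambda>_. 1) x)\<^sup>2 \<partial>M)"
      by (rule Tn_bounded) (auto simp: v_def)
    finally show ?thesis .
  qed
  show ?thesis by (rule chi_inf[OF low]) simp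
qed

end


definition klist :: "(real \<times> 'a set \<times> 'a set) list \<Rightarrow> 'a \<times> 'a \<Rightarrow> real" where
  "klist L z = (\<Sum>p\<leftarrow>L. fst p * indicator (fst (snd p)) (fst z) * indicator (snd (snd p)) (snd z))"

definition validL :: "'a measure \<Rightarrow> (real \<times> 'a set \<times> 'a set) list \<Rightarrow> bool" where
  "validL M L \<longleftrightarrow> (\<forall>p\<in>set L. fst (snd p) \<in> sets M \<and> snd (snd p) \<in> sets M)"

definition kbnd :: "(real \<times> 'a set \<times> 'a set) list \<Rightarrow> real" where
  "kbnd L = (\<Sum>p\<leftarrow>L. \<bar>fst p\<bar>)"

definition scaleL :: "real \<Rightarrow> (real \<times> 'a set \<times> 'a set) list \<Rightarrow> (real \<times> 'a set \<times> 'a set) list" where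
  "scaleL c L = map (\<lambda>p. (c * fst p, snd p)) L"

lemma klist_Nil[simp]: "klist [] z = 0" by (simp add: klist_def)
lemma klist_Cons[simp]: "klist (p # L) z = fst p * indicator (fst (snd p)) (fst z) * indicator (snd (snd p)) (snd z) + klist L z"
  by (simp add: klist_def)
lemma klist_append[simp]: "klist (L1 @ L2) z = klist L1 z + klist L2 z"
  by (simp add: klist_def)
lemma klist_scale[simp]: "klist (scaleL c L) z = c * klist L z"
  by (induction L) (auto simp: scaleL_def algebra_simps)
lemma validL_Nil[simp]: "validL M []" by (simp add: validL_def)
lemma validL_Cons[simp]: "validL M (p # L) \<longleftrightarrow> fst (snd p) \<in> sets M \<and> snd (snd p) \<in> sets M \<and> validL M L"
  by (auto simp: validL_def)
lemma validL_append[simp]: "validL M (L1 @ L2) \<longleftrightarrow> validL M L1 \<and> validL M L2"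
  by (auto simp: validL_def)
lemma validL_scale[simp]: "validL M (scaleL c L) \<longleftrightarrow> validL M L"
  by (auto simp: validL_def scaleL_def)
lemma kbnd_Nil[simp]: "kbnd [] = 0" by (simp add: kbnd_def)
lemma kbnd_Cons[simp]: "kbnd (p # L) = \<bar>fst p\<bar> + kbnd L" by (simp add: kbnd_def)

lemma klist_bnd: "\<bar>klist L z\<bar> \<le> kbnd L"
proof (induction L)
  case (Cons p L)
  have "\<bar>fst p * indicator (fst (snd p)) (fst z) * indicator (snd (snd p)) (snd z)\<bar> \<le> \<bar>fst p\<bar>"
    by (auto simp: indicator_def)
  then show ?case using Cons by (simp add: abs_triangle_ineq order_trans[OF abs_triangle_ineq])
qed simp

lemma klist_meas[measurable]:
  "validL M L \<Longrightarrow> klist L \<in> borel_measurable (M \<Otimes>\<^sub>M M)"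
proof (induction L)
  case (Cons p L)
  then have [measurable]: "fst (snd p) \<in> sets M" "snd (snd p) \<in> sets M" "klist L \<in> borel_measurable (M \<Otimes>\<^sub>M M)"
    by auto
  have "klist (p # L) = (\<lambda>z. fst p * indicator (fst (snd p)) (fst z) * indicator (snd (snd p)) (snd z) + klist L z)"
    by (simp add: fun_eq_iff)
  also have "\<dots> \<in> borel_measurable (M \<Otimes>\<^sub>M M)" by measurable
  finally show ?case .
next
  case Nil
  have "klist [] = (\<lambda>z. 0)" by (simp add: fun_eq_iff)
  then show ?case by simp
qed

lemma sq_add_real: "((a::real) + b)\<^sup>2 \<le> 2 * a\<^sup>2 + 2 * b\<^sup>2"
proof -
  have "(a + b)\<^sup>2 + (a - b)\<^sup>2 = 2 * a\<^sup>2 + 2 * b\<^sup>2" by (simp add: power2_eq_square algebra_simps)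
  moreover have "0 \<le> (a - b)\<^sup>2" by simp
  ultimately show ?thesis by linarith
qed

lemma int_sq_add:
  assumes [measurable]: "f \<in> borel_measurable N" "g \<in> borel_measurable N"
  shows "(\<integral>\<^sup>+z. ennreal ((f z + g z)\<^sup>2) \<partial>N) \<le> 2 * (\<integral>\<^sup>+z. ennreal ((f z)\<^sup>2) \<partial>N) + 2 * (\<integral>\<^sup>+z. ennreal ((g z)\<^sup>2) \<partial>N)"
proof -
  have "(\<integral>\<^sup>+z. ennreal ((f z + g z)\<^sup>2) \<partial>N) \<le> (\<integral>\<^sup>+z. 2 * ennreal ((f z)\<^sup>2) + 2 * ennreal ((g z)\<^sup>2) \<partial>N)"
  proof (intro nn_integral_mono)
    fix z
    have "ennreal ((f z + g z)\<^sup>2) \<le> ennreal (2 * (f z)\<^sup>2 + 2 * (g z)\<^sup>2)"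
      by (intro ennreal_leI sq_add_real)
    also have "\<dots> = 2 * ennreal ((f z)\<^sup>2) + 2 * ennreal ((g z)\<^sup>2)"
      by (simp add: ennreal_plus ennreal_mult)
    finally show "ennreal ((f z + g z)\<^sup>2) \<le> 2 * ennreal ((f z)\<^sup>2) + 2 * ennreal ((g z)\<^sup>2)" .
  qed
  also have "\<dots> = 2 * (\<integral>\<^sup>+z. ennreal ((f z)\<^sup>2) \<partial>N) + 2 * (\<integral>\<^sup>+z. ennreal ((g z)\<^sup>2) \<partial>N)"
    by (simp add: nn_integral_add nn_integral_cmult)
  finally show ?thesis .
qed

lemma ennreal_4:
  assumes "a \<le> ennreal (e/8)" "b \<le> ennreal (e/8)" "0 < e"
  shows "2 * a + 2 * b < ennreal e"
proof -
  have "2 * a + 2 * b \<le> 2 * ennreal (e/8) + 2 * ennreal (e/8)"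
    using assms by (intro add_mono mult_left_mono) auto
  also have "\<dots> = ennreal (e/2)"
  proof -
    have "2 * ennreal (e/8) = ennreal (e/4)" using ennreal_mult[of 2 "e/8"] assms by simp
    moreover have "ennreal (e/4) + ennreal (e/4) = ennreal (e/2)" using ennreal_plus[of "e/4" "e/4"] assms by simp
    ultimately show ?thesis by simp
  qed
  also have "\<dots> < ennreal e" using assms by (simp add: ennreal_less_iff)
  finally show ?thesis .
qed

locale hs = finite_measure M for M :: "'a measure"
begin

abbreviation N where "N \<equiv> M \<Otimes>\<^sub>M M"

sublocale P2: pair_sigma_finite M M
  by (simp add: pair_sigma_finite_def sigma_finite_measure_axioms)

lemma finN: "finite_measure N"
proof (rule finite_measureI)
  show "emeasure N (space N) \<noteq> \<infinity>"
    using emeasure_pair_measure_Times[of "space M" M "space M"]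
    by (simp add: space_pair_measure ennreal_mult_eq_top_iff)
qed

definition D :: "('a \<times> 'a \<Rightarrow> real) \<Rightarrow> (real \<times> 'a set \<times> 'a set) list \<Rightarrow> ennreal" where
  "D u L = (\<integral>\<^sup>+z. ennreal ((u z - klist L z)\<^sup>2) \<partial>N)"

definition apx :: "('a \<times> 'a \<Rightarrow> real) \<Rightarrow> bool" where
  "apx u \<longleftrightarrow> (\<forall>e>0. \<exists>L. validL M L \<and> D u L < ennreal e)"

lemma apx_klist: "validL M L \<Longrightarrow> apx (klist L)"
  unfolding apx_def D_def by (auto intro!: exI[of _ L])

lemma apx_cong: "(\<And>z. z \<in> space N \<Longrightarrow> u z = v z) \<Longrightarrow> apx u \<longleftrightarrow> apx v"
proof -
  assume "\<And>z. z \<in> space N \<Longrightarrow> u z = v z"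
  then have "D u L = D v L" for L unfolding D_def by (intro nn_integral_cong) auto
  then show ?thesis unfolding apx_def by simp
qed

lemma apx_add:
  assumes [measurable]: "u \<in> borel_measurable N" "v \<in> borel_measurable N"
    and au: "apx u" and av: "apx v"
  shows "apx (\<lambda>z. u z + v z)"
  unfolding apx_def
proof (intro allI impI)
  fix e :: real assume e: "0 < e"
  have e8: "0 < e/8" using e by simp
  obtain L1 where L1: "validL M L1" "D u L1 < ennreal (e/8)" using au e8 unfolding apx_def by blast
  obtain L2 where L2: "validL M L2" "D v L2 < ennreal (e/8)" using av e8 unfolding apx_def by blast
  have [measurable]: "klist L1 \<in> borel_measurable N" "klist L2 \<in> borel_measurable N" using L1 L2 by auto
  have "D (\<lambda>z. u z + v z) (L1 @ L2) = (\<integral>\<^sup>+z. ennreal (((u z - klist L1 z) + (v z - klist L2 z))\<^sup>2) \<partial>N)"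
    unfolding D_def by (intro nn_integral_cong) (simp add: algebra_simps)
  also have "\<dots> \<le> 2 * D u L1 + 2 * D v L2"
    unfolding D_def by (rule int_sq_add) measurable
  also have "\<dots> < ennreal e" using L1 L2 e by (intro ennreal_4) auto
  finally show "\<exists>L. validL M L \<and> D (\<lambda>z. u z + v z) L < ennreal e"
    using L1 L2 by (intro exI[of _ "L1 @ L2"]) auto
qed

lemma apx_scale:
  assumes [measurable]: "u \<in> borel_measurable N" and au: "apx u"
  shows "apx (\<lambda>z. c * u z)"
  unfolding apx_def
proof (intro allI impI)
  fix e :: real assume e: "0 < e"
  show "\<exists>L. validL M L \<and> D (\<lambda>z. c * u z) L < ennreal e"
  proof (cases "c = 0")
    case True
    then show ?thesis using e by (intro exI[of _ "[]"]) (simp add: D_def)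
  next
    case False
    then have c2: "0 < c\<^sup>2" by simp
    obtain L where L: "validL M L" "D u L < ennreal (e / c\<^sup>2)"
      using au e c2 unfolding apx_def by (meson divide_pos_pos)
    have [measurable]: "klist L \<in> borel_measurable N" using L by auto
    have "D (\<lambda>z. c * u z) (scaleL c L) = (\<integral>\<^sup>+z. ennreal (c\<^sup>2) * ennreal ((u z - klist L z)\<^sup>2) \<partial>N)"
      unfolding D_def by (intro nn_integral_cong) (simp add: ennreal_mult[symmetric] power_mult_distrib flip: right_diff_distrib)
    also have "\<dots> = ennreal (c\<^sup>2) * D u L"
      unfolding D_def using L by (intro nn_integral_cmult) measurable
    also have "\<dots> < ennreal (c\<^sup>2) * ennreal (e / c\<^sup>2)"
      using L c2 by (intro ennreal_mult_strict_left_mono) auto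
    also have "\<dots> = ennreal e"
    proof -
      have "ennreal (c\<^sup>2) * ennreal (e / c\<^sup>2) = ennreal (c\<^sup>2 * (e / c\<^sup>2))"
        using c2 e by (intro ennreal_mult[symmetric]) auto
      then show ?thesis using c2 by simp
    qed
    finally show ?thesis using L by (intro exI[of _ "scaleL c L"]) auto
  qed
qed

lemma apx_limit:
  assumes [measurable]: "u \<in> borel_measurable N"
    and h: "\<And>e. 0 < e \<Longrightarrow> \<exists>v. v \<in> borel_measurable N \<and> apx v \<and> (\<integral>\<^sup>+z. ennreal ((u z - v z)\<^sup>2) \<partial>N) < ennreal e"
  shows "apx u"
  unfolding apx_def
proof (intro allI impI)
  fix e :: real assume e: "0 < e"
  obtain v where v[measurable]: "v \<in> borel_measurable N" and av: "apx v"
    and uv: "(\<integral>\<^sup>+z. ennreal ((u z - v z)\<^sup>2) \<partial>N) < ennreal (e/8)"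
    using h[of "e/8"] e by auto
  have e8: "0 < e/8" using e by simp
  obtain L where L: "validL M L" "D v L < ennreal (e/8)" using av e8 unfolding apx_def by blast
  have [measurable]: "klist L \<in> borel_measurable N" using L by auto
  have "D u L = (\<integral>\<^sup>+z. ennreal (((u z - v z) + (v z - klist L z))\<^sup>2) \<partial>N)"
    unfolding D_def by (intro nn_integral_cong) (simp add: algebra_simps)
  also have "\<dots> \<le> 2 * (\<integral>\<^sup>+z. ennreal ((u z - v z)\<^sup>2) \<partial>N) + 2 * D v L"
    unfolding D_def by (rule int_sq_add) measurable
  also have "\<dots> < ennreal e" using uv L e by (intro ennreal_4) auto
  finally show "\<exists>L. validL M L \<and> D u L < ennreal e" using L by auto
qed

lemma apx_set:
  assumes A: "A \<in> sets N" shows "apx (indicator A)"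
  using Int_stable_pair_measure_generator pair_measure_closed A
  unfolding sets_pair_measure
proof (induct rule: sigma_sets_induct_disjoint)
  case (basic A)
  then obtain a b where ab: "A = a \<times> b" "a \<in> sets M" "b \<in> sets M" by auto
  have e: "indicator A = klist [(1, a, b)]" by (auto simp: fun_eq_iff ab indicator_times)
  have "apx (klist [(1, a, b)])" using ab by (intro apx_klist) simp
  then show ?case unfolding e .
next
  case empty
  have e: "indicator {} = klist []" by (simp add: fun_eq_iff)
  have "apx (klist [])" by (rule apx_klist) simp
  then show ?case unfolding e .
next
  case (compl A)
  have [measurable]: "A \<in> sets N" using compl(1) unfolding sets_pair_measure .
  have sub: "A \<subseteq> space M \<times> space M" using sets.sets_into_space[of A N] by (simp add: space_pair_measure)
  have v0: "validL M [(1, space M, space M)]" by simp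
  have [measurable]: "klist [(1, space M, space M)] \<in> borel_measurable N" using v0 by (rule klist_meas)
  have "apx (\<lambda>z. klist [(1, space M, space M)] z + (\<lambda>z. - 1 * indicator A z) z)"
    using compl(2) by (intro apx_add apx_klist apx_scale v0) measurable
  moreover have "klist [(1, space M, space M)] z + - 1 * indicator A z = indicator (space M \<times> space M - A) z"
    if "z \<in> space N" for z
    using that sub by (auto simp: indicator_def space_pair_measure)
  ultimately show ?case by (subst apx_cong[symmetric]) auto
next
  case (union A)
  interpret FN: finite_measure N by (rule finN)
  have Am[measurable]: "A i \<in> sets N" for i using union(2) unfolding sets_pair_measure by auto
  define B where "B n = (\<Union>i<n. A i)" for n
  have Bm[measurable]: "B n \<in> sets N" for n unfolding B_def by measurable
  have aB: "apx (indicator (B n))" for n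
  proof (induction n)
    case 0
    have e: "indicator (B 0) = klist []" by (simp add: B_def fun_eq_iff)
    have "apx (klist [])" by (rule apx_klist) simp
    then show ?case unfolding e .
  next
    case (Suc n)
    have disj: "A n \<inter> B n = {}"
    proof (rule ccontr)
      assume "A n \<inter> B n \<noteq> {}"
      then obtain z i where z: "z \<in> A n" "z \<in> A i" "i < n" by (auto simp: B_def)
      then have "A i \<inter> A n = {}" using union(1) unfolding disjoint_family_on_def by auto
      with z show False by auto
    qed
    have "indicator (B (Suc n)) = (\<lambda>z. indicator (B n) z + indicator (A n) z :: real)"
    proof
      fix z
      have "B (Suc n) = B n \<union> A n" by (auto simp: B_def lessThan_Suc)
      then show "indicator (B (Suc n)) z = indicator (B n) z + (indicator (A n) z :: real)"
        using disj by (auto simp: indicator_def)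
    qed
    moreover have "apx (\<lambda>z. indicator (B n) z + indicator (A n) z :: real)"
      using Suc union(3)[of n] by (intro apx_add) measurable
    ultimately show ?case by simp
  qed
  have UB: "(\<Union>n. B n) = (\<Union>i. A i)"
  proof (intro equalityI subsetI)
    fix z assume "z \<in> (\<Union>n. B n)" then show "z \<in> (\<Union>i. A i)" unfolding B_def by blast
  next
    fix z assume "z \<in> (\<Union>i. A i)"
    then obtain i where "z \<in> A i" by blast
    then have "z \<in> B (Suc i)" unfolding B_def by blast
    then show "z \<in> (\<Union>n. B n)" by blast
  qed
  have incB: "incseq B" unfolding B_def incseq_def
  proof (intro allI impI subsetI)
    fix m n z assume "m \<le> n" "z \<in> (\<Union>i<m. A i)"
    then obtain i where i: "i < m" "z \<in> A i" by blast
    then have "i < n" using \<open>m \<le> n\<close> by simp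
    with i show "z \<in> (\<Union>i<n. A i)" by blast
  qed
  have lim: "(\<lambda>n. measure N (B n)) \<longlonglongrightarrow> measure N (\<Union>i. A i)"
  proof -
    have "range B \<subseteq> sets N" by auto
    from FN.finite_Lim_measure_incseq[OF this incB] show ?thesis unfolding UB .
  qed
  show ?case
  proof (rule apx_limit)
    show "indicator (\<Union>i. A i) \<in> borel_measurable N" by measurable
  next
    fix e :: real assume e: "0 < e"
    obtain n where n: "\<bar>measure N (B n) - measure N (\<Union>i. A i)\<bar> < e"
      using LIMSEQ_D[OF lim e] by (auto simp: dist_real_def)
    have sub: "B n \<subseteq> (\<Union>i. A i)" unfolding B_def by blast
    have "(\<integral>\<^sup>+z. ennreal ((indicator (\<Union>i. A i) z - indicator (B n) z)\<^sup>2) \<partial>N)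
        = (\<integral>\<^sup>+z. indicator ((\<Union>i. A i) - B n) z \<partial>N)"
      using sub by (intro nn_integral_cong) (auto simp: indicator_def)
    also have "\<dots> = emeasure N ((\<Union>i. A i) - B n)" by simp
    also have "\<dots> = ennreal (measure N ((\<Union>i. A i) - B n))" by (simp add: FN.emeasure_eq_measure)
    also have "measure N ((\<Union>i. A i) - B n) = measure N (\<Union>i. A i) - measure N (B n)"
      using sub by (intro FN.finite_measure_Diff) auto
    also have "ennreal (measure N (\<Union>i. A i) - measure N (B n)) < ennreal e"
      using n e by (intro ennreal_lessI) auto
    finally show "\<exists>v. v \<in> borel_measurable N \<and> apx v \<and>
        (\<integral>\<^sup>+z. ennreal ((indicator (\<Union>i. A i) z - v z)\<^sup>2) \<partial>N) < ennreal e"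
      using aB[of n] by (intro exI[of _ "indicator (B n)"]) auto
  qed
qed

lemma apx_nn:
  assumes u[measurable]: "u \<in> borel_measurable N" and unn: "\<And>z. 0 \<le> u z"
    and fin: "(\<integral>\<^sup>+z. ennreal ((u z)\<^sup>2) \<partial>N) < \<infinity>"
  shows "apx u"
proof -
  have "(\<integral>\<^sup>+z. ennreal ((u z)\<^sup>2) \<partial>N) < \<infinity> \<longrightarrow> apx u"
    using u unn
  proof (induction u rule: borel_measurable_induct_real)
    case (set A) then show ?case by (auto intro: apx_set)
  next
    case (mult u c)
    note [measurable] = mult(2)
    show ?case
    proof
      assume f: "(\<integral>\<^sup>+z. ennreal ((c * u z)\<^sup>2) \<partial>N) < \<infinity>"
      show "apx (\<lambda>x. c * u x)"
      proof (cases "c = 0")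
        case True
        have e: "(\<lambda>x. c * u x) = klist []" using True by (simp add: fun_eq_iff)
        have "apx (klist [])" by (rule apx_klist) simp
        then show ?thesis unfolding e .
      next
        case False
        have "(\<integral>\<^sup>+z. ennreal ((c * u z)\<^sup>2) \<partial>N) = ennreal (c\<^sup>2) * (\<integral>\<^sup>+z. ennreal ((u z)\<^sup>2) \<partial>N)"
          by (simp add: power_mult_distrib ennreal_mult nn_integral_cmult)
        with f False have "(\<integral>\<^sup>+z. ennreal ((u z)\<^sup>2) \<partial>N) < \<infinity>"
          by (auto simp: ennreal_mult_less_top top.not_eq_extremum)
        then have "apx u" using mult(4) by simp
        then show ?thesis by (intro apx_scale) measurable
      qed
    qed
  next
    case (add u v)
    have [measurable]: "u \<in> borel_measurable N" "v \<in> borel_measurable N" using add by blast+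
    have unn': "\<And>x. 0 \<le> u x" and vnn': "\<And>x. 0 \<le> v x" using add by blast+
    have Pu: "(\<integral>\<^sup>+z. ennreal ((u z)\<^sup>2) \<partial>N) < \<infinity> \<longrightarrow> apx u" using add by blast
    have Pv: "(\<integral>\<^sup>+z. ennreal ((v z)\<^sup>2) \<partial>N) < \<infinity> \<longrightarrow> apx v" using add by blast
    show ?case
    proof
      assume f: "(\<integral>\<^sup>+z. ennreal ((v z + u z)\<^sup>2) \<partial>N) < \<infinity>"
      have "(\<integral>\<^sup>+z. ennreal ((u z)\<^sup>2) \<partial>N) \<le> (\<integral>\<^sup>+z. ennreal ((v z + u z)\<^sup>2) \<partial>N)"
        using unn' vnn' by (intro nn_integral_mono ennreal_leI power_mono) auto
      then have au: "apx u" using Pu f by simp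
      have "(\<integral>\<^sup>+z. ennreal ((v z)\<^sup>2) \<partial>N) \<le> (\<integral>\<^sup>+z. ennreal ((v z + u z)\<^sup>2) \<partial>N)"
        using unn' vnn' by (intro nn_integral_mono ennreal_leI power_mono) auto
      then have av: "apx v" using Pv f by simp
      show "apx (\<lambda>x. v x + u x)" using av au by (intro apx_add) measurable
    qed
  next
    case (seq U)
    have Um[measurable]: "\<And>i. U i \<in> borel_measurable N" using seq by blast
    have Unn: "\<And>i x. 0 \<le> U i x" using seq by blast
    have PU: "\<And>i. (\<integral>\<^sup>+z. ennreal ((U i z)\<^sup>2) \<partial>N) < \<infinity> \<longrightarrow> apx (U i)" using seq by blast
    have Uinc: "incseq U" using seq by blast
    have Uconv: "\<And>x. x \<in> space N \<Longrightarrow> (\<lambda>i. U i x) \<longlonglongrightarrow> u x" using seq by blast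
    show ?case
    proof
      assume f: "(\<integral>\<^sup>+z. ennreal ((u z)\<^sup>2) \<partial>N) < \<infinity>"
      have Ule: "U i z \<le> u z" if z: "z \<in> space N" for i z
        using Uinc Uconv[OF z] by (intro incseq_le) (auto simp: incseq_def dest: le_funD)
      have aU: "apx (U i)" for i
      proof -
        have "(\<integral>\<^sup>+z. ennreal ((U i z)\<^sup>2) \<partial>N) \<le> (\<integral>\<^sup>+z. ennreal ((u z)\<^sup>2) \<partial>N)"
          using Unn Ule by (intro nn_integral_mono ennreal_leI power_mono) auto
        then show ?thesis using PU[of i] f by simp
      qed
      show "apx u"
      proof (rule apx_limit)
        fix e :: real assume e: "0 < e"
        define h where "h i z = ennreal ((u z - U i z)\<^sup>2)" for i z
        have [measurable]: "h i \<in> borel_measurable N" for i unfolding h_def by measurable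
        have dec: "AE z in N. h (Suc i) z \<le> h i z" for i
        proof (intro AE_I2)
          fix z assume z: "z \<in> space N"
          have "U i \<le> U (Suc i)" using Uinc by (simp add: incseq_def)
          then have "U i z \<le> U (Suc i) z" by (rule le_funD)
          then show "h (Suc i) z \<le> h i z"
            unfolding h_def using Ule[OF z, of "Suc i"] by (intro ennreal_leI power_mono) auto
        qed
        have "(\<integral>\<^sup>+ z. h 0 z \<partial>N) \<le> (\<integral>\<^sup>+z. ennreal ((u z)\<^sup>2) \<partial>N)"
          unfolding h_def using Ule Unn by (intro nn_integral_mono ennreal_leI power_mono) auto
        then have h0: "(\<integral>\<^sup>+ z. h 0 z \<partial>N) < \<infinity>" using f by simp
        have I0: "(INF i. h i z) = 0" if z: "z \<in> space N" for z
        proof -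
          have "decseq (\<lambda>i. h i z)"
            unfolding decseq_def h_def
          proof (intro allI impI)
            fix m n :: nat assume "m \<le> n"
            then have "U m z \<le> U n z" using Uinc by (auto simp: incseq_def dest: le_funD)
            then show "ennreal ((u z - U n z)\<^sup>2) \<le> ennreal ((u z - U m z)\<^sup>2)"
              using Ule[OF z, of n] by (intro ennreal_leI power_mono) auto
          qed
          then have l1: "(\<lambda>i. h i z) \<longlonglongrightarrow> (INF i. h i z)" by (rule LIMSEQ_INF)
          have "(\<lambda>i. (u z - U i z)\<^sup>2) \<longlonglongrightarrow> (u z - u z)\<^sup>2"
            by (intro tendsto_intros Uconv[OF z])
          then have l2: "(\<lambda>i. h i z) \<longlonglongrightarrow> ennreal 0" unfolding h_def
            by (intro tendsto_ennrealI) simp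
          show ?thesis using LIMSEQ_unique[OF l1 l2] by simp
        qed
        have "(INF i. integral\<^sup>N N (h i)) = (\<integral>\<^sup>+ z. (INF i. h i z) \<partial>N)"
          using nn_integral_monotone_convergence_INF_AE'[OF dec _ h0] by simp
        also have "\<dots> = 0" using I0 by (simp cong: nn_integral_cong)
        finally have "(INF i. integral\<^sup>N N (h i)) < ennreal e" using e by simp
        then obtain i where "integral\<^sup>N N (h i) < ennreal e" by (auto simp: INF_less_iff)
        then show "\<exists>v. v \<in> borel_measurable N \<and> apx v \<and>
            (\<integral>\<^sup>+z. ennreal ((u z - v z)\<^sup>2) \<partial>N) < ennreal e"
          using aU[of i] by (intro exI[of _ "U i"]) (auto simp: h_def[abs_def])
      qed (measurable)
    qed
  qed
  then show ?thesis using fin by simp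
qed

end


lemma abs_le_sq: "\<bar>x::real\<bar> \<le> 1 + x\<^sup>2"
proof (cases "\<bar>x\<bar> \<le> 1")
  case False
  then have "\<bar>x\<bar> * 1 \<le> \<bar>x\<bar> * \<bar>x\<bar>" by (intro mult_left_mono) auto
  then show ?thesis by (simp add: power2_eq_square abs_mult_self_eq)
qed (simp add: add_increasing2)

definition Tl :: "'a measure \<Rightarrow> (real \<times> 'a set \<times> 'a set) list \<Rightarrow> ('a \<Rightarrow> real) \<Rightarrow> 'a \<Rightarrow> real" where
  "Tl M L f x = (\<Sum>p\<leftarrow>L. fst p * indicator (fst (snd p)) x * (\<integral>y. indicator (snd (snd p)) y * f y \<partial>M))"

lemma Tl_Nil[simp]: "Tl M [] f x = 0" by (simp add: Tl_def)
lemma Tl_Cons[simp]: "Tl M (p # L) f x = fst p * indicator (fst (snd p)) x * (\<integral>y. indicator (snd (snd p)) y * f y \<partial>M) + Tl M L f x"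
  by (simp add: Tl_def)

definition cauchyL2 :: "'a measure \<Rightarrow> (nat \<Rightarrow> 'a \<Rightarrow> real) \<Rightarrow> bool" where
  "cauchyL2 M G \<longleftrightarrow> (\<forall>e>0. \<exists>N::nat. \<forall>m\<ge>N. \<forall>n\<ge>N. (\<integral>\<^sup>+ x. ennreal ((G m x - G n x)\<^sup>2) \<partial>M) < ennreal e)"

lemma cauchyL2_subseq:
  assumes "cauchyL2 M G" "strict_mono s" shows "cauchyL2 M (\<lambda>n. G (s n))"
  unfolding cauchyL2_def
proof (intro allI impI)
  fix e :: real assume "0 < e"
  then obtain N where N: "\<forall>m\<ge>N. \<forall>n\<ge>N. (\<integral>\<^sup>+ x. ennreal ((G m x - G n x)\<^sup>2) \<partial>M) < ennreal e"
    using assms(1) unfolding cauchyL2_def by blast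
  have "\<forall>m\<ge>N. \<forall>n\<ge>N. (\<integral>\<^sup>+ x. ennreal ((G (s m) x - G (s n) x)\<^sup>2) \<partial>M) < ennreal e"
    using N seq_suble[OF assms(2)] by (meson order_trans)
  then show "\<exists>N. \<forall>m\<ge>N. \<forall>n\<ge>N. (\<integral>\<^sup>+ x. ennreal ((G (s m) x - G (s n) x)\<^sup>2) \<partial>M) < ennreal e" by blast
qed

lemma sq3_real: "((a::real) + b + c)\<^sup>2 \<le> 3 * a\<^sup>2 + 3 * b\<^sup>2 + 3 * c\<^sup>2"
proof -
  have "3 * a\<^sup>2 + 3 * b\<^sup>2 + 3 * c\<^sup>2 - (a + b + c)\<^sup>2 = (a - b)\<^sup>2 + (b - c)\<^sup>2 + (a - c)\<^sup>2"
    by (simp add: power2_eq_square algebra_simps)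
  moreover have "0 \<le> (a - b)\<^sup>2 + (b - c)\<^sup>2 + (a - c)\<^sup>2" by simp
  ultimately show ?thesis by linarith
qed

lemma int_sq3:
  assumes [measurable]: "f \<in> borel_measurable N" "g \<in> borel_measurable N" "h \<in> borel_measurable N"
  shows "(\<integral>\<^sup>+z. ennreal ((f z + g z + h z)\<^sup>2) \<partial>N) \<le> 3 * (\<integral>\<^sup>+z. ennreal ((f z)\<^sup>2) \<partial>N)
     + 3 * (\<integral>\<^sup>+z. ennreal ((g z)\<^sup>2) \<partial>N) + 3 * (\<integral>\<^sup>+z. ennreal ((h z)\<^sup>2) \<partial>N)"
proof -
  have "(\<integral>\<^sup>+z. ennreal ((f z + g z + h z)\<^sup>2) \<partial>N)
      \<le> (\<integral>\<^sup>+z. 3 * ennreal ((f z)\<^sup>2) + 3 * ennreal ((g z)\<^sup>2) + 3 * ennreal ((h z)\<^sup>2) \<partial>N)"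
  proof (intro nn_integral_mono)
    fix z
    have "ennreal ((f z + g z + h z)\<^sup>2) \<le> ennreal (3 * (f z)\<^sup>2 + 3 * (g z)\<^sup>2 + 3 * (h z)\<^sup>2)"
      by (intro ennreal_leI sq3_real)
    also have "\<dots> = 3 * ennreal ((f z)\<^sup>2) + 3 * ennreal ((g z)\<^sup>2) + 3 * ennreal ((h z)\<^sup>2)"
      by (simp add: ennreal_plus ennreal_mult)
    finally show "ennreal ((f z + g z + h z)\<^sup>2) \<le> 3 * ennreal ((f z)\<^sup>2) + 3 * ennreal ((g z)\<^sup>2) + 3 * ennreal ((h z)\<^sup>2)" .
  qed
  also have "\<dots> = 3 * (\<integral>\<^sup>+z. ennreal ((f z)\<^sup>2) \<partial>N)
     + 3 * (\<integral>\<^sup>+z. ennreal ((g z)\<^sup>2) \<partial>N) + 3 * (\<integral>\<^sup>+z. ennreal ((h z)\<^sup>2) \<partial>N)"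
    by (simp add: nn_integral_add nn_integral_cmult)
  finally show ?thesis .
qed

lemma ennreal_9:
  assumes "a \<le> ennreal (e/18)" "b \<le> ennreal (e/18)" "c \<le> ennreal (e/18)" "0 < e"
  shows "3 * a + 3 * b + 3 * c < ennreal e"
proof -
  have "3 * a + 3 * b + 3 * c \<le> 3 * ennreal (e/18) + 3 * ennreal (e/18) + 3 * ennreal (e/18)"
    using assms by (intro add_mono mult_left_mono) auto
  also have "\<dots> = ennreal (e/2)"
  proof -
    have "3 * ennreal (e/18) = ennreal (e/6)" using ennreal_mult[of 3 "e/18"] assms by simp
    moreover have "ennreal (e/6) + ennreal (e/6) = ennreal (e/3)" using ennreal_plus[of "e/6" "e/6"] assms by simp
    moreover have "ennreal (e/3) + ennreal (e/6) = ennreal (e/2)" using ennreal_plus[of "e/3" "e/6"] assms by simp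
    ultimately show ?thesis by simp
  qed
  also have "\<dots> < ennreal e" using assms by (simp add: ennreal_less_iff)
  finally show ?thesis .
qed

sublocale kern \<subseteq> hs M ..

context kern
begin

lemma L2_integrable: assumes f: "in_L2 M f" shows "integrable M f"
proof -
  have [measurable]: "f \<in> borel_measurable M" using f unfolding in_L2_def by simp
  have "(\<integral>\<^sup>+x. ennreal (norm (f x)) \<partial>M) \<le> (\<integral>\<^sup>+x. 1 + ennreal ((f x)\<^sup>2) \<partial>M)"
  proof (intro nn_integral_mono)
    fix x
    have "ennreal (norm (f x)) \<le> ennreal (1 + (f x)\<^sup>2)" by (intro ennreal_leI) (simp add: abs_le_sq)
    then show "ennreal (norm (f x)) \<le> 1 + ennreal ((f x)\<^sup>2)" by (simp add: ennreal_plus)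
  qed
  also have "\<dots> = emeasure M (space M) + (\<integral>\<^sup>+x. ennreal ((f x)\<^sup>2) \<partial>M)"
    by (simp add: nn_integral_add)
  also have "\<dots> < \<infinity>" using f ts unfolding in_L2_def type_space_def by simp
  finally show ?thesis by (intro integrableI_bounded) auto
qed

lemma HS_bound:
  fixes h :: "'a \<times> 'a \<Rightarrow> real"
  assumes [measurable]: "h \<in> borel_measurable N" "f \<in> borel_measurable M"
  shows "(\<integral>\<^sup>+x. ennreal ((\<integral>y. h (x,y) * f y \<partial>M)\<^sup>2) \<partial>M)
      \<le> (\<integral>\<^sup>+z. ennreal ((h z)\<^sup>2) \<partial>N) * (\<integral>\<^sup>+y. ennreal ((f y)\<^sup>2) \<partial>M)"
proof -
  have pt: "ennreal ((\<integral>y. h (x,y) * f y \<partial>M)\<^sup>2)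
      \<le> (\<integral>\<^sup>+y. ennreal ((h (x,y))\<^sup>2) \<partial>M) * (\<integral>\<^sup>+y. ennreal ((f y)\<^sup>2) \<partial>M)" if x: "x \<in> space M" for x
  proof (cases "integrable M (\<lambda>y. h (x,y) * f y)")
    case True
    have [measurable]: "(\<lambda>y. h (x,y)) \<in> borel_measurable M" using x by measurable
    have "ennreal ((\<integral>y. h (x,y) * f y \<partial>M)\<^sup>2) = (ennreal (norm (\<integral>y. h (x,y) * f y \<partial>M)))\<^sup>2"
      by (simp add: ennreal_power)
    also have "\<dots> \<le> (\<integral>\<^sup>+y. ennreal (norm (h (x,y) * f y)) \<partial>M)\<^sup>2"
      by (intro power_mono integral_norm_bound_ennreal True) auto
    also have "(\<integral>\<^sup>+y. ennreal (norm (h (x,y) * f y)) \<partial>M) = (\<integral>\<^sup>+y. ennreal \<bar>h (x,y)\<bar> * ennreal \<bar>f y\<bar> \<partial>M)"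
      by (simp add: abs_mult ennreal_mult)
    also have "(\<dots>)\<^sup>2 \<le> (\<integral>\<^sup>+y. (ennreal \<bar>h (x,y)\<bar>)\<^sup>2 \<partial>M) * (\<integral>\<^sup>+y. (ennreal \<bar>f y\<bar>)\<^sup>2 \<partial>M)"
      by (rule Cauchy_Schwarz_nn_integral) measurable
    also have "\<dots> = (\<integral>\<^sup>+y. ennreal ((h (x,y))\<^sup>2) \<partial>M) * (\<integral>\<^sup>+y. ennreal ((f y)\<^sup>2) \<partial>M)"
      by (simp add: ennreal_power)
    finally show ?thesis .
  next
    case False then show ?thesis by (simp add: not_integrable_integral_eq)
  qed
  have "(\<integral>\<^sup>+x. ennreal ((\<integral>y. h (x,y) * f y \<partial>M)\<^sup>2) \<partial>M)
      \<le> (\<integral>\<^sup>+x. (\<integral>\<^sup>+y. ennreal ((h (x,y))\<^sup>2) \<partial>M) * (\<integral>\<^sup>+y. ennreal ((f y)\<^sup>2) \<partial>M) \<partial>M)"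
    by (intro nn_integral_mono pt)
  also have "\<dots> = (\<integral>\<^sup>+x. \<integral>\<^sup>+y. ennreal ((h (x,y))\<^sup>2) \<partial>M \<partial>M) * (\<integral>\<^sup>+y. ennreal ((f y)\<^sup>2) \<partial>M)"
    by (rule nn_integral_multc) measurable
  also have "(\<integral>\<^sup>+x. \<integral>\<^sup>+y. ennreal ((h (x,y))\<^sup>2) \<partial>M \<partial>M) = (\<integral>\<^sup>+z. ennreal ((h z)\<^sup>2) \<partial>N)"
    by (rule nn_integral_fst) measurable
  finally show ?thesis .
qed

lemma Tl_eq:
  assumes L: "validL M L" and f: "integrable M f"
  shows "integrable M (\<lambda>y. klist L (x,y) * f y) \<and> (\<integral>y. klist L (x,y) * f y \<partial>M) = Tl M L f x"
  using L
proof (induction L)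
  case Nil then show ?case by simp
next
  case (Cons p L)
  then have B: "snd (snd p) \<in> sets M" and IH: "integrable M (\<lambda>y. klist L (x,y) * f y)"
      "(\<integral>y. klist L (x,y) * f y \<partial>M) = Tl M L f x" by auto
  have iB: "integrable M (\<lambda>y. indicator (snd (snd p)) y * f y)"
    using integrable_real_mult_indicator[OF B f] by (simp add: mult_ac)
  let ?c = "fst p * indicator (fst (snd p)) x"
  have e: "(\<lambda>y. klist (p # L) (x,y) * f y) = (\<lambda>y. ?c * (indicator (snd (snd p)) y * f y) + klist L (x,y) * f y)"
    by (simp add: fun_eq_iff algebra_simps)
  have i1: "integrable M (\<lambda>y. ?c * (indicator (snd (snd p)) y * f y))" using iB by simp
  show ?case unfolding e using i1 IH by (simp add: integral_add)
qed

lemma T_minus_Tl: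
  assumes ae: "AE x in M. integrable M (\<lambda>y. k x y * f y)" and L: "validL M L" and f: "in_L2 M f"
  shows "(\<integral>\<^sup>+x. ennreal ((T_op M k f x - Tl M L f x)\<^sup>2) \<partial>M)
       \<le> D (\<lambda>z. max 0 (k (fst z) (snd z))) L * (\<integral>\<^sup>+y. ennreal ((f y)\<^sup>2) \<partial>M)"
proof -
  have [measurable]: "f \<in> borel_measurable M" using f unfolding in_L2_def by simp
  have [measurable]: "klist L \<in> borel_measurable N" using L by simp
  have fi: "integrable M f" using f by (rule L2_integrable)
  define h where "h z = max 0 (k (fst z) (snd z)) - klist L z" for z
  have [measurable]: "h \<in> borel_measurable N" unfolding h_def by measurable
  have "AE x in M. T_op M k f x - Tl M L f x = (\<integral>y. h (x,y) * f y \<partial>M)"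
    using ae
  proof (rule AE_mp, intro AE_I2 impI)
    fix x assume x: "x \<in> space M" and int: "integrable M (\<lambda>y. k x y * f y)"
    have tl: "integrable M (\<lambda>y. klist L (x,y) * f y)" "(\<integral>y. klist L (x,y) * f y \<partial>M) = Tl M L f x"
      using Tl_eq[OF L fi] by auto
    have "(\<integral>y. h (x,y) * f y \<partial>M) = (\<integral>y. k x y * f y - klist L (x,y) * f y \<partial>M)"
      using x k_nonneg by (intro Bochner_Integration.integral_cong[OF refl]) (auto simp: h_def algebra_simps)
    also have "\<dots> = T_op M k f x - Tl M L f x"
      using int tl by (simp add: T_op_def)
    finally show "T_op M k f x - Tl M L f x = (\<integral>y. h (x,y) * f y \<partial>M)" by simp
  qed
  then have "(\<integral>\<^sup>+x. ennreal ((T_op M k f x - Tl M L f x)\<^sup>2) \<partial>M) = (\<integral>\<^sup>+x. ennreal ((\<integral>y. h (x,y) * f y \<partial>M)\<^sup>2) \<partial>M)"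
    by (intro nn_integral_cong_AE) (auto elim!: AE_mp)
  also have "\<dots> \<le> (\<integral>\<^sup>+z. ennreal ((h z)\<^sup>2) \<partial>N) * (\<integral>\<^sup>+y. ennreal ((f y)\<^sup>2) \<partial>M)"
    by (rule HS_bound) measurable
  also have "(\<integral>\<^sup>+z. ennreal ((h z)\<^sup>2) \<partial>N) = D (\<lambda>z. max 0 (k (fst z) (snd z))) L"
    unfolding D_def h_def ..
  finally show ?thesis .
qed

lemma HS_part1:
  assumes HS: "(\<integral>\<^sup>+ z. ennreal ((k (fst z) (snd z))\<^sup>2) \<partial>N) < \<infinity>" and f: "in_L2 M f"
  shows "(AE x in M. integrable M (\<lambda>y. k x y * f y)) \<and> in_L2 M (T_op M k f)"
proof
  have [measurable]: "f \<in> borel_measurable M" using f unfolding in_L2_def by simp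
  have kk: "(\<lambda>z. k (fst z) (snd z)) \<in> borel_measurable N" using k_meas by (simp add: case_prod_beta')
  have "(\<integral>\<^sup>+x. \<integral>\<^sup>+y. ennreal ((k x y)\<^sup>2) \<partial>M \<partial>M) = (\<integral>\<^sup>+ z. ennreal ((k (fst z) (snd z))\<^sup>2) \<partial>N)"
    using nn_integral_fst[of "\<lambda>z. ennreal ((k (fst z) (snd z))\<^sup>2)" M] by simp
  then have "AE x in M. (\<integral>\<^sup>+y. ennreal ((k x y)\<^sup>2) \<partial>M) \<noteq> \<infinity>"
    using HS by (intro nn_integral_PInf_AE) auto
  then show ae: "AE x in M. integrable M (\<lambda>y. k x y * f y)"
  proof (rule AE_mp, intro AE_I2 impI)
    fix x assume x: "x \<in> space M" and fin: "(\<integral>\<^sup>+y. ennreal ((k x y)\<^sup>2) \<partial>M) \<noteq> \<infinity>"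
    have [measurable]: "k x \<in> borel_measurable M" using x by (rule k_sec)
    have "(\<integral>\<^sup>+y. ennreal (norm (k x y * f y)) \<partial>M)\<^sup>2 = (\<integral>\<^sup>+y. ennreal \<bar>k x y\<bar> * ennreal \<bar>f y\<bar> \<partial>M)\<^sup>2"
      by (simp add: abs_mult ennreal_mult)
    also have "\<dots> \<le> (\<integral>\<^sup>+y. (ennreal \<bar>k x y\<bar>)\<^sup>2 \<partial>M) * (\<integral>\<^sup>+y. (ennreal \<bar>f y\<bar>)\<^sup>2 \<partial>M)"
      by (rule Cauchy_Schwarz_nn_integral) measurable
    also have "\<dots> = (\<integral>\<^sup>+y. ennreal ((k x y)\<^sup>2) \<partial>M) * (\<integral>\<^sup>+y. ennreal ((f y)\<^sup>2) \<partial>M)"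
      by (simp add: ennreal_power)
    also have "\<dots> < \<infinity>" using fin f unfolding in_L2_def by (simp add: ennreal_mult_less_top less_top)
    finally have "(\<integral>\<^sup>+y. ennreal (norm (k x y * f y)) \<partial>M) < \<infinity>"
      by (simp add: power_less_top_ennreal)
    then show "integrable M (\<lambda>y. k x y * f y)" by (intro integrableI_bounded) auto
  qed
  have Tm[measurable]: "T_op M k f \<in> borel_measurable M"
    unfolding T_op_def by measurable
  have "(\<integral>\<^sup>+x. ennreal ((T_op M k f x)\<^sup>2) \<partial>M) = (\<integral>\<^sup>+x. ennreal ((\<integral>y. k (fst (x,y)) (snd (x,y)) * f y \<partial>M)\<^sup>2) \<partial>M)"
    by (simp add: T_op_def)
  also have "\<dots> \<le> (\<integral>\<^sup>+ z. ennreal ((k (fst z) (snd z))\<^sup>2) \<partial>N) * (\<integral>\<^sup>+y. ennreal ((f y)\<^sup>2) \<partial>M)"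
    using kk by (intro HS_bound) measurable
  also have "\<dots> < \<infinity>" using HS f unfolding in_L2_def by (simp add: ennreal_mult_less_top less_top)
  finally show "in_L2 M (T_op M k f)" unfolding in_L2_def by simp
qed

lemma coef_bound:
  assumes f: "in_L2 M f" and f1: "(\<integral>\<^sup>+ x. ennreal ((f x)\<^sup>2) \<partial>M) \<le> 1" and B: "B \<in> sets M"
  shows "\<bar>\<integral>y. indicator B y * f y \<partial>M\<bar> \<le> 1 + measure M (space M)"
proof -
  have [measurable]: "f \<in> borel_measurable M" using f unfolding in_L2_def by simp
  have fi: "integrable M f" using f by (rule L2_integrable)
  have iB: "integrable M (\<lambda>y. indicator B y * f y)"
    using integrable_real_mult_indicator[OF B fi] by (simp add: mult_ac)
  have "ennreal \<bar>\<integral>y. indicator B y * f y \<partial>M\<bar> \<le> (\<integral>\<^sup>+y. ennreal (norm (indicator B y * f y)) \<partial>M)"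
    using integral_norm_bound_ennreal[OF iB] by simp
  also have "\<dots> \<le> (\<integral>\<^sup>+y. 1 * ennreal \<bar>f y\<bar> \<partial>M)"
    by (intro nn_integral_mono ennreal_leI) (auto simp: indicator_def)
  finally have a: "ennreal \<bar>\<integral>y. indicator B y * f y \<partial>M\<bar> \<le> (\<integral>\<^sup>+y. 1 * ennreal \<bar>f y\<bar> \<partial>M)" .
  have "(\<integral>\<^sup>+y. 1 * ennreal \<bar>f y\<bar> \<partial>M)\<^sup>2 \<le> (\<integral>\<^sup>+y. 1\<^sup>2 \<partial>M) * (\<integral>\<^sup>+y. (ennreal \<bar>f y\<bar>)\<^sup>2 \<partial>M)"
    by (rule Cauchy_Schwarz_nn_integral) measurable
  also have "\<dots> = emeasure M (space M) * (\<integral>\<^sup>+ x. ennreal ((f x)\<^sup>2) \<partial>M)"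
    by (simp add: ennreal_power)
  also have "\<dots> \<le> emeasure M (space M) * 1" using f1 by (intro mult_left_mono) auto
  also have "\<dots> = ennreal (measure M (space M))" by (simp add: emeasure_eq_measure)
  finally have b: "(\<integral>\<^sup>+y. 1 * ennreal \<bar>f y\<bar> \<partial>M)\<^sup>2 \<le> ennreal (measure M (space M))" .
  have "(ennreal \<bar>\<integral>y. indicator B y * f y \<partial>M\<bar>)\<^sup>2 \<le> ennreal (measure M (space M))"
    using power_mono[OF a, of 2] b by simp
  moreover have "(ennreal \<bar>\<integral>y. indicator B y * f y \<partial>M\<bar>)\<^sup>2 = ennreal ((\<integral>y. indicator B y * f y \<partial>M)\<^sup>2)"
    by (simp add: ennreal_power)
  ultimately have "ennreal ((\<integral>y. indicator B y * f y \<partial>M)\<^sup>2) \<le> ennreal (measure M (space M))" by simp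
  then have "\<bar>\<integral>y. indicator B y * f y \<partial>M\<bar>\<^sup>2 \<le> measure M (space M)"
    by (simp add: ennreal_le_iff)
  then show ?thesis using abs_le_sq[of "\<integral>y. indicator B y * f y \<partial>M"] by simp
qed

lemma Tl_meas[measurable]: "validL M L \<Longrightarrow> Tl M L f \<in> borel_measurable M"
proof (induction L)
  case Nil
  have "Tl M [] f = (\<lambda>x. 0)" by (simp add: fun_eq_iff)
  then show ?case by simp
next
  case (Cons p L)
  then have [measurable]: "fst (snd p) \<in> sets M" "Tl M L f \<in> borel_measurable M" by auto
  have "Tl M (p # L) f = (\<lambda>x. fst p * indicator (fst (snd p)) x * (\<integral>y. indicator (snd (snd p)) y * f y \<partial>M) + Tl M L f x)"
    by (simp add: fun_eq_iff)
  also have "\<dots> \<in> borel_measurable M" by measurable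
  finally show ?case .
qed

lemma fr_compact:
  fixes F :: "nat \<Rightarrow> 'a \<Rightarrow> real"
  assumes L: "validL M L" and F: "\<forall>n. in_L2 M (F n) \<and> (\<integral>\<^sup>+ x. ennreal ((F n x)\<^sup>2) \<partial>M) \<le> 1"
  shows "\<exists>r. strict_mono r \<and> cauchyL2 M (\<lambda>n. Tl M L (F (r n)))"
  using L F
proof (induction L arbitrary: F)
  case Nil
  have c0: "cauchyL2 M (\<lambda>n x. 0)" unfolding cauchyL2_def by simp
  have "strict_mono (id :: nat \<Rightarrow> nat)" by (simp add: strict_mono_def)
  then show ?case using c0 by (intro exI[of _ id]) (simp add: id_def)
next
  case (Cons p L)
  define c where "c = fst p"
  define A where "A = fst (snd p)"
  define B where "B = snd (snd p)"
  have A: "A \<in> sets M" and B: "B \<in> sets M" and VL: "validL M L" using Cons(2) by (auto simp: A_def B_def)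
  define a where "a n = (\<integral>y. indicator B y * F n y \<partial>M)" for n
  have abnd: "norm (a n) \<le> 1 + measure M (space M)" for n
    unfolding a_def using coef_bound[of "F n" B] Cons(3) B by auto
  obtain r1 where r1: "strict_mono r1" and mono: "monoseq (\<lambda>n. a (r1 n))" using seq_monosub by blast
  have "Bseq (\<lambda>n. a (r1 n))" using abnd by (intro BseqI') auto
  then have conv: "convergent (\<lambda>n. a (r1 n))" using mono by (rule Bseq_monoseq_convergent)
  have F1: "\<forall>n. in_L2 M (F (r1 n)) \<and> (\<integral>\<^sup>+ x. ennreal ((F (r1 n) x)\<^sup>2) \<partial>M) \<le> 1" using Cons(3) by blast
  obtain r2 where r2: "strict_mono r2" and cH: "cauchyL2 M (\<lambda>n. Tl M L (F (r1 (r2 n))))"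
    using Cons.IH[OF VL F1] by blast
  define r where "r = r1 \<circ> r2"
  have r: "strict_mono r" unfolding r_def using r1 r2 by (rule strict_mono_o)
  have "convergent (\<lambda>n. a (r n))"
  proof -
    obtain l where "(\<lambda>n. a (r1 n)) \<longlonglongrightarrow> l" using conv unfolding convergent_def by blast
    then have "(\<lambda>n. a (r1 (r2 n))) \<longlonglongrightarrow> l" using LIMSEQ_subseq_LIMSEQ[OF _ r2] by (simp add: o_def)
    then show ?thesis unfolding r_def convergent_def by auto
  qed
  then have ca: "Cauchy (\<lambda>n. a (r n))" by (rule convergent_Cauchy)
  define m where "m = measure M (space M)"
  have m0: "0 \<le> m" unfolding m_def by simp
  have eq: "Tl M (p # L) (F (r n)) x = c * indicator A x * a (r n) + Tl M L (F (r n)) x" for n x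
    by (simp add: a_def c_def A_def B_def)
  have "cauchyL2 M (\<lambda>n. Tl M (p # L) (F (r n)))"
    unfolding cauchyL2_def
  proof (intro allI impI)
    fix e :: real assume e: "0 < e"
    define \<delta> where "\<delta> = min 1 (e / (8 * (c\<^sup>2 * m + 1)))"
    have dpos: "0 < \<delta>" unfolding \<delta>_def using e m0 by (auto intro!: divide_pos_pos add_nonneg_pos)
    obtain N1 where N1: "\<forall>m\<ge>N1. \<forall>n\<ge>N1. dist (a (r m)) (a (r n)) < \<delta>"
      using ca dpos unfolding Cauchy_def by blast
    obtain N2 where N2: "\<forall>m\<ge>N2. \<forall>n\<ge>N2. (\<integral>\<^sup>+ x. ennreal ((Tl M L (F (r m)) x - Tl M L (F (r n)) x)\<^sup>2) \<partial>M) < ennreal (e/8)"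
    proof -
      have "0 < e/8" using e by simp
      then show ?thesis using cH that unfolding cauchyL2_def r_def o_def by blast
    qed
    have "(\<integral>\<^sup>+ x. ennreal ((Tl M (p # L) (F (r i)) x - Tl M (p # L) (F (r j)) x)\<^sup>2) \<partial>M) < ennreal e"
      if ij: "i \<ge> max N1 N2" "j \<ge> max N1 N2" for i j
    proof -
      have d: "\<bar>a (r i) - a (r j)\<bar> < \<delta>" using N1 ij by (auto simp: dist_real_def)
      have d2: "(a (r i) - a (r j))\<^sup>2 \<le> \<delta>"
      proof -
        have "(a (r i) - a (r j))\<^sup>2 = \<bar>a (r i) - a (r j)\<bar> * \<bar>a (r i) - a (r j)\<bar>" by (simp add: power2_eq_square)
        also have "\<dots> \<le> \<delta> * 1" using d \<open>0 < \<delta>\<close> by (intro mult_mono) (auto simp: \<delta>_def)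
        finally show ?thesis by simp
      qed
      have cm: "c\<^sup>2 * m * \<delta> \<le> e / 8"
      proof -
        have "c\<^sup>2 * m * \<delta> \<le> c\<^sup>2 * m * (e / (8 * (c\<^sup>2 * m + 1)))"
          using m0 by (intro mult_left_mono) (auto simp: \<delta>_def)
        also have "\<dots> = (e / 8) * (c\<^sup>2 * m / (c\<^sup>2 * m + 1))"
          using m0 by (simp add: field_simps)
        also have "\<dots> \<le> (e / 8) * 1"
        proof -
          have t0: "0 \<le> c\<^sup>2 * m" using m0 by simp
          then have "c\<^sup>2 * m / (c\<^sup>2 * m + 1) \<le> 1" by (simp add: divide_le_eq)
          then show ?thesis using e by (intro mult_left_mono) auto
        qed
        finally show ?thesis by simp
      qed
      have [measurable]: "A \<in> sets M" "Tl M L (F (r i)) \<in> borel_measurable M" "Tl M L (F (r j)) \<in> borel_measurable M"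
        using A VL by auto
      have "(\<integral>\<^sup>+ x. ennreal ((Tl M (p # L) (F (r i)) x - Tl M (p # L) (F (r j)) x)\<^sup>2) \<partial>M)
          = (\<integral>\<^sup>+ x. ennreal ((c * indicator A x * (a (r i) - a (r j)) + (Tl M L (F (r i)) x - Tl M L (F (r j)) x))\<^sup>2) \<partial>M)"
        unfolding eq by (simp add: algebra_simps)
      also have "\<dots> \<le> 2 * (\<integral>\<^sup>+ x. ennreal ((c * indicator A x * (a (r i) - a (r j)))\<^sup>2) \<partial>M)
          + 2 * (\<integral>\<^sup>+ x. ennreal ((Tl M L (F (r i)) x - Tl M L (F (r j)) x)\<^sup>2) \<partial>M)"
        using A by (intro int_sq_add) measurable
      also have "\<dots> < ennreal e"
      proof (intro ennreal_4 e)
        have "(\<integral>\<^sup>+ x. ennreal ((c * indicator A x * (a (r i) - a (r j)))\<^sup>2) \<partial>M)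
            \<le> (\<integral>\<^sup>+ x. ennreal (c\<^sup>2 * (a (r i) - a (r j))\<^sup>2) \<partial>M)"
          by (intro nn_integral_mono ennreal_leI) (auto simp: indicator_def power_mult_distrib)
        also have "\<dots> = ennreal (c\<^sup>2 * (a (r i) - a (r j))\<^sup>2) * ennreal m"
          by (simp add: m_def emeasure_eq_measure)
        also have "\<dots> = ennreal (c\<^sup>2 * (a (r i) - a (r j))\<^sup>2 * m)" using m0 by (simp add: ennreal_mult)
        also have "\<dots> \<le> ennreal (e / 8)"
        proof (intro ennreal_leI)
          have "c\<^sup>2 * (a (r i) - a (r j))\<^sup>2 * m = c\<^sup>2 * m * (a (r i) - a (r j))\<^sup>2" by simp
          also have "\<dots> \<le> c\<^sup>2 * m * \<delta>" using d2 m0 by (intro mult_left_mono) auto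
          finally show "c\<^sup>2 * (a (r i) - a (r j))\<^sup>2 * m \<le> e / 8" using cm by simp
        qed
        finally show "(\<integral>\<^sup>+ x. ennreal ((c * indicator A x * (a (r i) - a (r j)))\<^sup>2) \<partial>M) \<le> ennreal (e / 8)" .
        show "(\<integral>\<^sup>+ x. ennreal ((Tl M L (F (r i)) x - Tl M L (F (r j)) x)\<^sup>2) \<partial>M) \<le> ennreal (e / 8)"
          using N2 ij by (auto intro: less_imp_le)
      qed
      finally show ?thesis .
    qed
    then show "\<exists>N. \<forall>m\<ge>N. \<forall>n\<ge>N. (\<integral>\<^sup>+ x. ennreal ((Tl M (p # L) (F (r m)) x - Tl M (p # L) (F (r n)) x)\<^sup>2) \<partial>M) < ennreal e"
      by blast
  qed
  then show ?case using r by blast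
qed

theorem HS_compact:
  assumes HS: "(\<integral>\<^sup>+ z. ennreal ((k (fst z) (snd z))\<^sup>2) \<partial>N) < \<infinity>"
  shows "T_compact M k"
  unfolding T_compact_def
proof (rule conjI)
  show "\<forall>f. in_L2 M f \<longrightarrow> (AE x in M. integrable M (\<lambda>y. k x y * f y)) \<and> in_L2 M (T_op M k f)"
    using HS_part1[OF HS] by blast
next
  show "\<forall>F :: nat \<Rightarrow> 'a \<Rightarrow> real. (\<forall>n. in_L2 M (F n) \<and> (\<integral>\<^sup>+ x. ennreal ((F n x)\<^sup>2) \<partial>M) \<le> 1) \<longrightarrow>
        (\<exists>r :: nat \<Rightarrow> nat. strict_mono r \<and>
           (\<forall>e>0. \<exists>N::nat. \<forall>m\<ge>N. \<forall>n\<ge>N.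
              (\<integral>\<^sup>+ x. ennreal ((T_op M k (F (r m)) x - T_op M k (F (r n)) x)\<^sup>2) \<partial>M)
                < ennreal e))"
  proof (intro allI impI)
  fix F :: "nat \<Rightarrow> 'a \<Rightarrow> real"
  assume F: "\<forall>n. in_L2 M (F n) \<and> (\<integral>\<^sup>+ x. ennreal ((F n x)\<^sup>2) \<partial>M) \<le> 1"
  define u where "u z = max 0 (k (fst z) (snd z))" for z
  have kk[measurable]: "(\<lambda>z. k (fst z) (snd z)) \<in> borel_measurable N" using k_meas by (simp add: case_prod_beta')
  have um[measurable]: "u \<in> borel_measurable N" unfolding u_def by measurable
  have "(\<integral>\<^sup>+z. ennreal ((u z)\<^sup>2) \<partial>N) \<le> (\<integral>\<^sup>+ z. ennreal ((k (fst z) (snd z))\<^sup>2) \<partial>N)"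
    unfolding u_def by (intro nn_integral_mono ennreal_leI) (auto simp: max_def)
  then have "(\<integral>\<^sup>+z. ennreal ((u z)\<^sup>2) \<partial>N) < \<infinity>" using HS by simp
  then have au: "apx u" using um by (intro apx_nn) (auto simp: u_def)
  have "\<forall>j. \<exists>L. validL M L \<and> D u L < ennreal (1 / Suc j)"
    using au unfolding apx_def by simp
  from choice[OF this] obtain Ls where LsA: "\<forall>j. validL M (Ls j) \<and> D u (Ls j) < ennreal (1 / Suc j)"
    by blast
  have Ls: "\<And>j. validL M (Ls j)" "\<And>j. D u (Ls j) < ennreal (1 / Suc j)" using LsA by auto
  have DL: "D u = D (\<lambda>z. max 0 (k (fst z) (snd z)))" unfolding u_def ..
  interpret S: subseqs "\<lambda>j s. cauchyL2 M (\<lambda>n. Tl M (Ls j) (F (s n)))"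
  proof
    fix j and s :: "nat \<Rightarrow> nat" assume s: "strict_mono s"
    have "\<forall>n. in_L2 M (F (s n)) \<and> (\<integral>\<^sup>+ x. ennreal ((F (s n) x)\<^sup>2) \<partial>M) \<le> 1" using F by blast
    from fr_compact[OF Ls(1) this] obtain r' where "strict_mono r'" "cauchyL2 M (\<lambda>n. Tl M (Ls j) (F (s (r' n))))"
      by blast
    then show "\<exists>r'. strict_mono r' \<and> cauchyL2 M (\<lambda>n. Tl M (Ls j) (F ((s \<circ> r') n)))" by auto
  qed
  define d where "d = S.diagseq"
  have d: "strict_mono d" unfolding d_def by (rule S.subseq_diagseq)
  have dj: "cauchyL2 M (\<lambda>n. Tl M (Ls j) (F (d (Suc j + n))))" for j
  proof -
    have "cauchyL2 M (\<lambda>n. Tl M (Ls j) (F ((S.diagseq \<circ> (+) (Suc j)) n)))"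
    proof (rule S.diagseq_holds)
      fix r s n assume "strict_mono (r :: nat \<Rightarrow> nat)" "cauchyL2 M (\<lambda>i. Tl M (Ls n) (F (s i)))"
      from cauchyL2_subseq[OF this(2) this(1)] show "cauchyL2 M (\<lambda>i. Tl M (Ls n) (F ((s \<circ> r) i)))"
        by (simp add: o_def)
    qed
    then show ?thesis by (simp add: d_def o_def)
  qed
  have cT: "cauchyL2 M (\<lambda>n. T_op M k (F (d n)))"
    unfolding cauchyL2_def
  proof (intro allI impI)
    fix e :: real assume e: "0 < e"
    obtain j where j: "inverse (real (Suc j)) < e / 18" using reals_Archimedean[of "e/18"] e by auto
    have "0 < e / 18" using e by simp
    then obtain N' where N': "\<forall>m\<ge>N'. \<forall>n\<ge>N'. (\<integral>\<^sup>+ x. ennreal ((Tl M (Ls j) (F (d (Suc j + m))) x - Tl M (Ls j) (F (d (Suc j + n))) x)\<^sup>2) \<partial>M) < ennreal (e/18)"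
      using dj[of j] unfolding cauchyL2_def by blast
    have approxT: "(\<integral>\<^sup>+x. ennreal ((T_op M k (F i) x - Tl M (Ls j) (F i) x)\<^sup>2) \<partial>M) \<le> ennreal (e / 18)" for i
    proof -
      have Fi: "in_L2 M (F i)" "(\<integral>\<^sup>+ x. ennreal ((F i x)\<^sup>2) \<partial>M) \<le> 1" using F by auto
      have ae: "AE x in M. integrable M (\<lambda>y. k x y * F i y)" using HS_part1[OF HS Fi(1)] by blast
      have "(\<integral>\<^sup>+x. ennreal ((T_op M k (F i) x - Tl M (Ls j) (F i) x)\<^sup>2) \<partial>M)
          \<le> D u (Ls j) * (\<integral>\<^sup>+y. ennreal ((F i y)\<^sup>2) \<partial>M)"
        unfolding DL by (rule T_minus_Tl[OF ae Ls(1) Fi(1)])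
      also have "\<dots> \<le> D u (Ls j) * 1" using Fi(2) by (intro mult_left_mono) auto
      also have "\<dots> \<le> ennreal (1 / Suc j)" using Ls(2)[of j] by simp
      also have "\<dots> \<le> ennreal (e / 18)" using j by (intro ennreal_leI) (simp add: inverse_eq_divide)
      finally show ?thesis .
    qed
    have "(\<integral>\<^sup>+ x. ennreal ((T_op M k (F (d a)) x - T_op M k (F (d b)) x)\<^sup>2) \<partial>M) < ennreal e"
      if ab: "a \<ge> Suc j + N'" "b \<ge> Suc j + N'" for a b
    proof -
      define a' where "a' = a - Suc j"
      define b' where "b' = b - Suc j"
      have a': "a = Suc j + a'" "a' \<ge> N'" using ab(1) unfolding a'_def by auto
      have b': "b = Suc j + b'" "b' \<ge> N'" using ab(2) unfolding b'_def by auto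
      have Fa: "in_L2 M (F (d a))" "in_L2 M (F (d b))" using F by auto
      have [measurable]: "T_op M k (F (d a)) \<in> borel_measurable M" "T_op M k (F (d b)) \<in> borel_measurable M"
        using HS_part1[OF HS Fa(1)] HS_part1[OF HS Fa(2)] unfolding in_L2_def by auto
      have [measurable]: "Tl M (Ls j) (F (d a)) \<in> borel_measurable M" "Tl M (Ls j) (F (d b)) \<in> borel_measurable M"
        using Ls(1) by auto
      have "(\<integral>\<^sup>+ x. ennreal ((T_op M k (F (d a)) x - T_op M k (F (d b)) x)\<^sup>2) \<partial>M)
          = (\<integral>\<^sup>+ x. ennreal (((T_op M k (F (d a)) x - Tl M (Ls j) (F (d a)) x)
              + (Tl M (Ls j) (F (d a)) x - Tl M (Ls j) (F (d b)) x)
              + (Tl M (Ls j) (F (d b)) x - T_op M k (F (d b)) x))\<^sup>2) \<partial>M)"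
        by (intro nn_integral_cong) (simp add: algebra_simps)
      also have "\<dots> \<le> 3 * (\<integral>\<^sup>+ x. ennreal ((T_op M k (F (d a)) x - Tl M (Ls j) (F (d a)) x)\<^sup>2) \<partial>M)
          + 3 * (\<integral>\<^sup>+ x. ennreal ((Tl M (Ls j) (F (d a)) x - Tl M (Ls j) (F (d b)) x)\<^sup>2) \<partial>M)
          + 3 * (\<integral>\<^sup>+ x. ennreal ((Tl M (Ls j) (F (d b)) x - T_op M k (F (d b)) x)\<^sup>2) \<partial>M)"
        by (rule int_sq3) measurable
      also have "\<dots> < ennreal e"
      proof (rule ennreal_9[OF approxT _ _ e])
        show "(\<integral>\<^sup>+ x. ennreal ((Tl M (Ls j) (F (d a)) x - Tl M (Ls j) (F (d b)) x)\<^sup>2) \<partial>M) \<le> ennreal (e / 18)"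
          using N' a'(2) b'(2) unfolding a'(1) b'(1) by (auto intro: less_imp_le)
        have "(\<integral>\<^sup>+ x. ennreal ((Tl M (Ls j) (F (d b)) x - T_op M k (F (d b)) x)\<^sup>2) \<partial>M)
            = (\<integral>\<^sup>+ x. ennreal ((T_op M k (F (d b)) x - Tl M (Ls j) (F (d b)) x)\<^sup>2) \<partial>M)"
          by (simp add: power2_commute)
        also have "\<dots> \<le> ennreal (e / 18)" by (rule approxT)
        finally show "(\<integral>\<^sup>+ x. ennreal ((Tl M (Ls j) (F (d b)) x - T_op M k (F (d b)) x)\<^sup>2) \<partial>M) \<le> ennreal (e / 18)" .
      qed
      finally show ?thesis .
    qed
    then show "\<exists>N. \<forall>m\<ge>N. \<forall>n\<ge>N. (\<integral>\<^sup>+ x. ennreal ((T_op M k (F (d m)) x - T_op M k (F (d n)) x)\<^sup>2) \<partial>M) < ennreal e"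
      by blast
  qed
  show "\<exists>r :: nat \<Rightarrow> nat. strict_mono r \<and>
           (\<forall>e>0. \<exists>N::nat. \<forall>m\<ge>N. \<forall>n\<ge>N.
              (\<integral>\<^sup>+ x. ennreal ((T_op M k (F (r m)) x - T_op M k (F (r n)) x)\<^sup>2) \<partial>M)
                < ennreal e)"
    using d cT unfolding cauchyL2_def by blast
  qed
qed

end

theorem theorem3p4:
  fixes M :: "'a measure" and \<kappa> :: "'a \<Rightarrow> 'a \<Rightarrow> real"
  assumes "type_space M" and "is_kernel M \<kappa>"
  shows "(critical M \<kappa> \<and> T_compact M \<kappa> \<longrightarrow> chi M \<kappa> = \<infinity>)
       \<and> ((\<integral>\<^sup>+ z. ennreal ((\<kappa> (fst z) (snd z))\<^sup>2) \<partial>(M \<Otimes>\<^sub>M M)) < \<infinity> \<longrightarrow> T_compact M \<kappa>)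
       \<and> (critical M \<kappa> \<and> (\<integral>\<^sup>+ z. ennreal ((\<kappa> (fst z) (snd z))\<^sup>2) \<partial>(M \<Otimes>\<^sub>M M)) < \<infinity>
            \<longrightarrow> chi M \<kappa> = \<infinity>)
       \<and> (supercritical M \<kappa> \<longrightarrow> chi M \<kappa> = \<infinity>)"
proof -
  interpret K: kern M \<kappa> using assms by unfold_locales
  have c1: "critical M \<kappa> \<and> T_compact M \<kappa> \<longrightarrow> chi M \<kappa> = \<infinity>" using K.critical_case by blast
  have c2: "(\<integral>\<^sup>+ z. ennreal ((\<kappa> (fst z) (snd z))\<^sup>2) \<partial>(M \<Otimes>\<^sub>M M)) < \<infinity> \<longrightarrow> T_compact M \<kappa>"
    using K.HS_compact by blast
  have c4: "supercritical M \<kappa> \<longrightarrow> chi M \<kappa> = \<infinity>" using K.supercrit by blast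
  show ?thesis using c1 c2 c4 by blast
qed

end
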